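(* Let $M$ be the metric space \[M:=\Big\{\Big(a,\tfrac{1}{2^{n}}\Big)\colon a\in[0,1],\ n\in\mathbb{N}\Big\}\cup \Big\{(a,b)\colon a\in\{0,1\},\ b\in\Big[0,\tfrac{1}{2}\Big]\Big\}\subseteq\mathbb{R}^2\] with the metric \[d\big((a,b),(c,e)\big):=\begin{cases} |a-c|, & \text{if }b=e,\\ \min\{a+c,\,2-a-c\}+|b-e|, &\text{if } b\neq e, \end{cases}\] and base point $(0,0)$. Let $x=(0,0)$ and $y=(1,0)$. For every $\varepsilon\in(0,1)$ and every $\mu\in B_{\mathcal{F}(M)}$, if \[\|m_{xy}\pm \mu\|<1+\varepsilon^{2}/64\quad\text{and}\quad \|\mu\|> 1-\varepsilon^{2}/64,\] then there exist $\delta>0$ and $\nu\in\operatorname{conv}\big(\mathrm{Mol}_{\delta,\varepsilon}(M)\big)$ such that $\|\mu-\nu\|<\varepsilon$.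
   Context: For a pointed metric space $(M,d,0)$, $\mathrm{Lip}_0(M)$ is the Banach space of Lipschitz functions $f\colon M\to\mathbb{R}$ with $f(0)=0$, normed by the best Lipschitz constant. The Lipschitz-free space $\mathcal{F}(M)$ is the norm-closed linear span of the evaluation functionals $\delta_u$ ($\delta_u(f)=f(u)$), $u\in M$, in $\mathrm{Lip}_0(M)^*$. For $u\neq v$ in $M$, the molecule is $m_{uv}=(\delta_u-\delta_v)/d(u,v)$. With $\pi_2(a,b)=b$, for $\delta,\varepsilon>0$ set $\mathrm{Mol}_{\delta,\varepsilon}(M)=\{m_{uv}\colon u,v\in M,\ u\neq v,\ \delta<\pi_2(u)<\varepsilon,\ \delta<\pi_2(v)<\varepsilon\}$; $\operatorname{conv}$ denotes the convex hull. $B_X$ is the closed unit ball; $\mathbb{N}=\{1,2,\dots\}$. *)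

theory Defs
  imports "HOL-Analysis.Analysis"
begin

definition Mset :: "(real \<times> real) set" where
  "Mset = {(a, 1 / 2 ^ n) | a n. a \<in> {0..1} \<and> n \<ge> (1::nat)}
        \<union> {(a, b) | a b. a \<in> {0, 1} \<and> b \<in> {0..1/2}}"

definition dM :: "real \<times> real \<Rightarrow> real \<times> real \<Rightarrow> real" where
  "dM p q = (if snd p = snd q then \<bar>fst p - fst q\<bar>
             else min (fst p + fst q) (2 - fst p - fst q) + \<bar>snd p - snd q\<bar>)"

definition basept :: "real \<times> real" where "basept = (0, 0)"

text \<open>Functions are taken to vanish off M (extensional representatives).\<close>
definition Lip0 :: "(real \<times> real \<Rightarrow> real) set" where
  "Lip0 = {f. f basept = 0 \<and> (\<forall>p. p \<notin> Mset \<longrightarrow> f p = 0) \<and>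
              (\<exists>L. \<forall>u\<in>Mset. \<forall>v\<in>Mset. \<bar>f u - f v\<bar> \<le> L * dM u v)}"

definition Lip0_ball :: "(real \<times> real \<Rightarrow> real) set" where
  "Lip0_ball = {f \<in> Lip0. \<forall>u\<in>Mset. \<forall>v\<in>Mset. \<bar>f u - f v\<bar> \<le> dM u v}"

definition fnorm :: "((real \<times> real \<Rightarrow> real) \<Rightarrow> real) \<Rightarrow> real" where
  "fnorm \<phi> = Sup {\<bar>\<phi> f\<bar> | f. f \<in> Lip0_ball}"

text \<open>Lipschitz-free space: the norm closure of the span of the evaluation functionals.\<close>
definition FreeSp :: "((real \<times> real \<Rightarrow> real) \<Rightarrow> real) set" where
  "FreeSp = {\<phi>. \<forall>e>0. \<exists>(n::nat) (c::nat \<Rightarrow> real) (p::nat \<Rightarrow> real \<times> real).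
                 (\<forall>i<n. p i \<in> Mset) \<and>
                 fnorm (\<lambda>f. \<phi> f - (\<Sum>i<n. c i * f (p i))) < e}"

definition mol :: "real \<times> real \<Rightarrow> real \<times> real \<Rightarrow> (real \<times> real \<Rightarrow> real) \<Rightarrow> real" where
  "mol u v = (\<lambda>f. (f u - f v) / dM u v)"

definition Mol :: "real \<Rightarrow> real \<Rightarrow> ((real \<times> real \<Rightarrow> real) \<Rightarrow> real) set" where
  "Mol \<delta> \<epsilon> = {mol u v | u v. u \<in> Mset \<and> v \<in> Mset \<and> u \<noteq> v \<and>
                   \<delta> < snd u \<and> snd u < \<epsilon> \<and> \<delta> < snd v \<and> snd v < \<epsilon>}"

definition convF :: "((real \<times> real \<Rightarrow> real) \<Rightarrow> real) set \<Rightarrow> ((real \<times> real \<Rightarrow> real) \<Rightarrow> real) set" where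
  "convF A = {\<nu>. \<exists>(n::nat) (w::nat \<Rightarrow> real) g. (\<forall>i<n. 0 \<le> w i \<and> g i \<in> A) \<and>
                 (\<Sum>i<n. w i) = 1 \<and> \<nu> = (\<lambda>f. \<Sum>i<n. w i * g i f)}"

end

theory Submission
  imports Defs
begin


lemma Mset_props:
  assumes "p \<in> Mset"
  shows "0 \<le> fst p" "fst p \<le> 1" "0 \<le> snd p" "snd p \<le> 1/2"
        "snd p = 0 \<Longrightarrow> fst p = 0 \<or> fst p = 1"
proof -
  have h: "(1::real) / 2 ^ n \<le> 1/2" "(0::real) < 1/2^n" if "n \<ge> 1" for n :: nat
  proof -
    have "(2::real) ^ 1 \<le> 2 ^ n" using that by (intro power_increasing) auto
    then show "(1::real) / 2 ^ n \<le> 1/2" by (simp add: field_simps)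
    show "(0::real) < 1/2^n" by simp
  qed
  show "0 \<le> fst p" "fst p \<le> 1" "0 \<le> snd p" "snd p \<le> 1/2"
        "snd p = 0 \<Longrightarrow> fst p = 0 \<or> fst p = 1"
    using assms h unfolding Mset_def by (auto; fastforce)+
qed



lemma dM_tri_gen:
  assumes "0 \<le> a" "a \<le> 1" "0 \<le> c" "c \<le> 1" "0 \<le> g" "g \<le> 1"
  shows "dM (a,b) (g,h) \<le> dM (a,b) (c,e) + dM (c,e) (g,h)"
  using assms unfolding dM_def by (auto simp: min_def abs_if split: if_splits)

lemma dM_tri:
  assumes "p \<in> Mset" "q \<in> Mset" "r \<in> Mset"
  shows "dM p r \<le> dM p q + dM q r"
  using dM_tri_gen[of "fst p" "fst q" "fst r" "snd p" "snd r" "snd q"] Mset_props[OF assms(1)]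
    Mset_props[OF assms(2)] Mset_props[OF assms(3)] by simp

lemma dM_sym: "dM p q = dM q p"
  unfolding dM_def by (auto simp: min_def abs_if)

lemma dM_self: "dM p p = 0" unfolding dM_def by simp

lemma dM_pos:
  assumes "p \<in> Mset" "q \<in> Mset" "p \<noteq> q" shows "0 < dM p q"
  using Mset_props[OF assms(1)] Mset_props[OF assms(2)] assms(3)
  unfolding dM_def by (cases p; cases q; auto simp: min_def)

lemma dM_nonneg:
  assumes "p \<in> Mset" "q \<in> Mset" shows "0 \<le> dM p q"
  using dM_pos[OF assms] dM_self[of p] by (cases "p = q") auto

lemma fst_lip: assumes "p \<in> Mset" "q \<in> Mset" shows "\<bar>fst p - fst q\<bar> \<le> dM p q"
  using Mset_props[OF assms(1)] Mset_props[OF assms(2)]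
  unfolding dM_def by (auto simp: min_def abs_if)

lemma g1_lip: assumes "p \<in> Mset" "q \<in> Mset"
  shows "\<bar>(fst p + snd p) - (fst q + snd q)\<bar> \<le> dM p q"
  using Mset_props[OF assms(1)] Mset_props[OF assms(2)]
  unfolding dM_def by (auto simp: min_def abs_if)

lemma g2_lip: assumes "p \<in> Mset" "q \<in> Mset"
  shows "\<bar>(snd p - fst p) - (snd q - fst q)\<bar> \<le> dM p q"
  using Mset_props[OF assms(1)] Mset_props[OF assms(2)]
  unfolding dM_def by (auto simp: min_def abs_if)

lemma dM_base: assumes "p \<in> Mset" shows "dM p (0,0) = fst p + snd p"
  using Mset_props[OF assms] unfolding dM_def by (cases p) (auto simp: min_def)



lemma ball_lip: "f \<in> Lip0_ball \<Longrightarrow> u \<in> Mset \<Longrightarrow> v \<in> Mset \<Longrightarrow> \<bar>f u - f v\<bar> \<le> dM u v"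
  unfolding Lip0_ball_def by auto

lemma ball_base: "f \<in> Lip0_ball \<Longrightarrow> f (0,0) = 0"
  unfolding Lip0_ball_def Lip0_def basept_def by auto

lemma ball_out: "f \<in> Lip0_ball \<Longrightarrow> p \<notin> Mset \<Longrightarrow> f p = 0"
  unfolding Lip0_ball_def Lip0_def by blast

lemma ballI:
  assumes "f (0,0) = 0" "\<And>p. p \<notin> Mset \<Longrightarrow> f p = 0"
    "\<And>u v. u \<in> Mset \<Longrightarrow> v \<in> Mset \<Longrightarrow> \<bar>f u - f v\<bar> \<le> dM u v"
  shows "f \<in> Lip0_ball"
proof -
  have "\<forall>u\<in>Mset. \<forall>v\<in>Mset. \<bar>f u - f v\<bar> \<le> 1 * dM u v" using assms(3) by auto
  then show ?thesis unfolding Lip0_ball_def Lip0_def basept_def using assms by blast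
qed

lemma zero_ball: "(\<lambda>p. 0) \<in> Lip0_ball"
  by (rule ballI) (auto intro: dM_nonneg)

lemma base_in: "(0,0) \<in> Mset" unfolding Mset_def by auto
lemma y_in: "(1,0) \<in> Mset" unfolding Mset_def by auto

lemma ball_bound: "f \<in> Lip0_ball \<Longrightarrow> u \<in> Mset \<Longrightarrow> \<bar>f u\<bar> \<le> fst u + snd u"
  using ball_lip[of f u "(0,0)"] ball_base[of f] dM_base[of u] base_in by auto

lemma ball_bound2: "f \<in> Lip0_ball \<Longrightarrow> \<bar>f u\<bar> \<le> 2"
proof (cases "u \<in> Mset")
  case True
  assume "f \<in> Lip0_ball"
  then show ?thesis using ball_bound[of f u] Mset_props[OF True] True by auto
next
  case False
  assume "f \<in> Lip0_ball"
  then show ?thesis using ball_out[of f u] False by auto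
qed

definition bnd :: "((real \<times> real \<Rightarrow> real) \<Rightarrow> real) \<Rightarrow> bool" where
  "bnd \<phi> \<longleftrightarrow> bdd_above {\<bar>\<phi> f\<bar> | f. f \<in> Lip0_ball}"

lemma bndI: "(\<And>f. f \<in> Lip0_ball \<Longrightarrow> \<bar>\<phi> f\<bar> \<le> B) \<Longrightarrow> bnd \<phi>"
  unfolding bnd_def bdd_above_def by blast

lemma bndE: "bnd \<phi> \<Longrightarrow> \<exists>B. \<forall>f\<in>Lip0_ball. \<bar>\<phi> f\<bar> \<le> B"
  unfolding bnd_def bdd_above_def by blast

lemma fnorm_ge: "bnd \<phi> \<Longrightarrow> f \<in> Lip0_ball \<Longrightarrow> \<bar>\<phi> f\<bar> \<le> fnorm \<phi>"
  unfolding fnorm_def bnd_def by (rule cSup_upper) auto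

lemma fnorm_le: "(\<And>f. f \<in> Lip0_ball \<Longrightarrow> \<bar>\<phi> f\<bar> \<le> c) \<Longrightarrow> fnorm \<phi> \<le> c"
  unfolding fnorm_def by (rule cSup_least) (use zero_ball in auto)

lemma fnorm_witness: "fnorm \<phi> > c \<Longrightarrow> \<exists>f\<in>Lip0_ball. \<bar>\<phi> f\<bar> > c"
  using fnorm_le[of \<phi> c] by force

lemma fnorm_unbdd: "\<not> bnd \<phi> \<Longrightarrow> \<not> bnd \<psi> \<Longrightarrow> fnorm \<phi> = fnorm \<psi>"
proof -
  assume a: "\<not> bnd \<phi>" "\<not> bnd \<psi>"
  have e: "(\<lambda>z. \<forall>x\<in>{\<bar>\<phi> f\<bar> | f. f \<in> Lip0_ball}. x \<le> z) = (\<lambda>z. \<forall>x\<in>{\<bar>\<psi> f\<bar> | f. f \<in> Lip0_ball}. x \<le> z)"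
    using a unfolding bnd_def bdd_above_def by (auto intro!: ext)
  show ?thesis unfolding fnorm_def Sup_real_def e ..
qed

definition finF :: "nat \<Rightarrow> (nat \<Rightarrow> real) \<Rightarrow> (nat \<Rightarrow> real \<times> real) \<Rightarrow> (real \<times> real \<Rightarrow> real) \<Rightarrow> real" where
  "finF n c p = (\<lambda>f. \<Sum>i<n. c i * f (p i))"

lemma finF_bnd: "bnd (finF n c p)"
proof (rule bndI)
  fix f assume f: "f \<in> Lip0_ball"
  have "\<bar>finF n c p f\<bar> \<le> (\<Sum>i<n. \<bar>c i * f (p i)\<bar>)" unfolding finF_def by (rule sum_abs)
  also have "\<dots> \<le> (\<Sum>i<n. \<bar>c i\<bar> * 2)"
    by (rule sum_mono) (simp add: abs_mult mult_left_mono ball_bound2[OF f])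
  finally show "\<bar>finF n c p f\<bar> \<le> (\<Sum>i<n. \<bar>c i\<bar> * 2)" .
qed

lemma bnd_add: "bnd \<phi> \<Longrightarrow> bnd \<psi> \<Longrightarrow> bnd (\<lambda>f. \<phi> f + \<psi> f)"
proof -
  assume "bnd \<phi>" "bnd \<psi>"
  then obtain A B where "\<forall>f\<in>Lip0_ball. \<bar>\<phi> f\<bar> \<le> A" "\<forall>f\<in>Lip0_ball. \<bar>\<psi> f\<bar> \<le> B" using bndE by metis
  then show ?thesis by (intro bndI[where B="A+B"]) (auto simp: abs_triangle_ineq intro: order.trans[OF abs_triangle_ineq] add_mono)
qed

lemma bnd_diff: "bnd \<phi> \<Longrightarrow> bnd \<psi> \<Longrightarrow> bnd (\<lambda>f. \<phi> f - \<psi> f)"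
proof -
  assume "bnd \<phi>" "bnd \<psi>"
  then obtain A B where "\<forall>f\<in>Lip0_ball. \<bar>\<phi> f\<bar> \<le> A" "\<forall>f\<in>Lip0_ball. \<bar>\<psi> f\<bar> \<le> B" using bndE by metis
  then show ?thesis by (intro bndI[where B="A+B"]) (auto intro: order.trans[OF abs_triangle_ineq4] add_mono)
qed

lemma FreeSp_unfold: "\<mu> \<in> FreeSp \<Longrightarrow> e > 0 \<Longrightarrow> \<exists>n c p. (\<forall>i<n. p i \<in> Mset) \<and> fnorm (\<lambda>f. \<mu> f - finF n c p f) < e"
  unfolding FreeSp_def finF_def by blast

lemma mu_bnd:
  assumes "\<mu> \<in> FreeSp" "fnorm \<mu> > 0" shows "bnd \<mu>"
proof (rule ccontr)
  assume nb: "\<not> bnd \<mu>"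
  obtain n c p where "fnorm (\<lambda>f. \<mu> f - finF n c p f) < fnorm \<mu>"
    using FreeSp_unfold[OF assms(1) assms(2)] by blast
  moreover have "\<not> bnd (\<lambda>f. \<mu> f - finF n c p f)"
  proof
    assume "bnd (\<lambda>f. \<mu> f - finF n c p f)"
    from bnd_add[OF this finF_bnd] have "bnd (\<lambda>f. \<mu> f - finF n c p f + finF n c p f)" .
    then show False using nb by simp
  qed
  ultimately have "fnorm (\<lambda>f. \<mu> f - finF n c p f) = fnorm \<mu>"
    using fnorm_unbdd[OF nb, of "\<lambda>f. \<mu> f - finF n c p f"] by simp
  with \<open>fnorm (\<lambda>f. \<mu> f - finF n c p f) < fnorm \<mu>\<close> show False by simp
qed

lemma mu_approx:
  assumes "\<mu> \<in> FreeSp" "bnd \<mu>" "e > 0"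
  shows "\<exists>n c p. (\<forall>i<n. p i \<in> Mset) \<and> (\<forall>f\<in>Lip0_ball. \<bar>\<mu> f - finF n c p f\<bar> < e)"
proof -
  obtain n c p where p: "\<forall>i<n. p i \<in> Mset" and lt: "fnorm (\<lambda>f. \<mu> f - finF n c p f) < e"
    using FreeSp_unfold[OF assms(1) assms(3)] by blast
  have "bnd (\<lambda>f. \<mu> f - finF n c p f)" by (rule bnd_diff[OF assms(2) finF_bnd])
  then have "\<forall>f\<in>Lip0_ball. \<bar>\<mu> f - finF n c p f\<bar> < e"
    using fnorm_ge[of "\<lambda>f. \<mu> f - finF n c p f"] lt by fastforce
  then show ?thesis using p by blast
qed

lemma mu_lin:
  assumes "\<mu> \<in> FreeSp" "bnd \<mu>" "f \<in> Lip0_ball" "g \<in> Lip0_ball" "(\<lambda>p. \<alpha> * f p + \<beta> * g p) \<in> Lip0_ball"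
  shows "\<mu> (\<lambda>p. \<alpha> * f p + \<beta> * g p) = \<alpha> * \<mu> f + \<beta> * \<mu> g"
proof -
  let ?h = "\<lambda>p. \<alpha> * f p + \<beta> * g p"
  let ?D = "\<bar>\<mu> ?h - (\<alpha> * \<mu> f + \<beta> * \<mu> g)\<bar>"
  have "?D \<le> e * (1 + \<bar>\<alpha>\<bar> + \<bar>\<beta>\<bar>)" if e: "e > 0" for e
  proof -
    obtain n c p where ap: "\<forall>f\<in>Lip0_ball. \<bar>\<mu> f - finF n c p f\<bar> < e"
      using mu_approx[OF assms(1,2) e] by blast
    have lin: "finF n c p ?h = \<alpha> * finF n c p f + \<beta> * finF n c p g"
      unfolding finF_def by (simp add: sum_distrib_left sum.distrib algebra_simps)
    have a1: "\<bar>\<mu> ?h - finF n c p ?h\<bar> \<le> e" using ap assms(5) by force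
    have a2: "\<bar>\<alpha> * (\<mu> f - finF n c p f)\<bar> \<le> \<bar>\<alpha>\<bar> * e"
      unfolding abs_mult using ap assms(3) by (intro mult_left_mono) force+
    have a3: "\<bar>\<beta> * (\<mu> g - finF n c p g)\<bar> \<le> \<bar>\<beta>\<bar> * e"
      unfolding abs_mult using ap assms(4) by (intro mult_left_mono) force+
    have "?D = \<bar>(\<mu> ?h - finF n c p ?h) - \<alpha> * (\<mu> f - finF n c p f) - \<beta> * (\<mu> g - finF n c p g)\<bar>"
      using lin by (simp add: algebra_simps)
    also have "\<dots> \<le> e + \<bar>\<alpha>\<bar> * e + \<bar>\<beta>\<bar> * e" using a1 a2 a3 by linarith
    finally show ?thesis by (simp add: algebra_simps)
  qed
  then have "?D \<le> 0"
  proof -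
    assume h: "\<And>e. e > 0 \<Longrightarrow> ?D \<le> e * (1 + \<bar>\<alpha>\<bar> + \<bar>\<beta>\<bar>)"
    show "?D \<le> 0"
    proof (rule field_le_epsilon)
      fix e :: real assume "0 < e"
      then have "e / (1 + \<bar>\<alpha>\<bar> + \<bar>\<beta>\<bar>) > 0" by (simp add: add_pos_nonneg)
      from h[OF this] show "?D \<le> 0 + e" by simp
    qed
  qed
  then show ?thesis by simp
qed



lemma abs_max_le: "\<bar>max a b - max c d\<bar> \<le> max \<bar>a - c\<bar> \<bar>b - d\<bar>" for a b c d :: real
  by (auto simp: max_def abs_if)
lemma abs_min_le: "\<bar>min a b - min c d\<bar> \<le> max \<bar>a - c\<bar> \<bar>b - d\<bar>" for a b c d :: real
  by (auto simp: min_def max_def abs_if)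

definition genk :: "real \<Rightarrow> (real \<times> real \<Rightarrow> real) \<Rightarrow> real \<times> real \<Rightarrow> real" where
  "genk l k = (\<lambda>p. if p \<in> Mset then max (-(fst p + snd p)) (min (snd p - fst p) ((l * k p - fst p)/(1+l))) else 0)"

lemma genk_ball:
  assumes "0 \<le> l" "k \<in> Lip0_ball"
  shows "genk l k \<in> Lip0_ball" "genk l k (1,0) = -1"
proof -
  show "genk l k (1,0) = -1" unfolding genk_def using y_in by simp
  show "genk l k \<in> Lip0_ball"
  proof (rule ballI)
    show "genk l k (0,0) = 0" unfolding genk_def using base_in by simp
    show "\<And>p. p \<notin> Mset \<Longrightarrow> genk l k p = 0" unfolding genk_def by simp
    fix u v assume u: "u \<in> Mset" and v: "v \<in> Mset"
    have k: "\<bar>k u - k v\<bar> \<le> dM u v" using ball_lip[OF assms(2) u v] .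
    have f: "\<bar>fst u - fst v\<bar> \<le> dM u v" using fst_lip[OF u v] .
    have "(l * k u - fst u)/(1+l) - (l * k v - fst v)/(1+l) = (l * (k u - k v) - (fst u - fst v)) / (1+l)"
    proof -
      have "(l * k u - fst u) - (l * k v - fst v) = l * (k u - k v) - (fst u - fst v)" by (simp add: algebra_simps)
      then show ?thesis by (metis diff_divide_distrib)
    qed
    then have "\<bar>(l * k u - fst u)/(1+l) - (l * k v - fst v)/(1+l)\<bar> = \<bar>l * (k u - k v) - (fst u - fst v)\<bar> / (1+l)"
      using assms(1) by (simp add: abs_divide)
    also have "\<dots> \<le> (l * dM u v + dM u v) / (1+l)"
    proof (rule divide_right_mono)
      have "\<bar>l * (k u - k v)\<bar> \<le> l * dM u v" using k assms(1) by (simp add: abs_mult mult_left_mono)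
      then show "\<bar>l * (k u - k v) - (fst u - fst v)\<bar> \<le> l * dM u v + dM u v" using f by linarith
    qed (use assms(1) in simp)
    also have "\<dots> = dM u v" using assms(1) by (simp add: field_simps)
    finally have t3: "\<bar>(l * k u - fst u)/(1+l) - (l * k v - fst v)/(1+l)\<bar> \<le> dM u v" .
    have t1: "\<bar>-(fst u + snd u) - -(fst v + snd v)\<bar> \<le> dM u v" using g1_lip[OF u v] by simp
    have t2: "\<bar>(snd u - fst u) - (snd v - fst v)\<bar> \<le> dM u v" using g2_lip[OF u v] by simp
    have "\<bar>genk l k u - genk l k v\<bar> \<le> max \<bar>-(fst u + snd u) - -(fst v + snd v)\<bar>
       \<bar>min (snd u - fst u) ((l * k u - fst u)/(1+l)) - min (snd v - fst v) ((l * k v - fst v)/(1+l))\<bar>"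
    proof -
      have gu: "genk l k u = max (-(fst u + snd u)) (min (snd u - fst u) ((l * k u - fst u)/(1+l)))"
        unfolding genk_def using u by simp
      have gv: "genk l k v = max (-(fst v + snd v)) (min (snd v - fst v) ((l * k v - fst v)/(1+l)))"
        unfolding genk_def using v by simp
      show ?thesis unfolding gu gv by (rule abs_max_le)
    qed
    also have "\<dots> \<le> dM u v"
    proof -
      have "\<bar>min (snd u - fst u) ((l * k u - fst u)/(1+l)) - min (snd v - fst v) ((l * k v - fst v)/(1+l))\<bar> \<le> dM u v"
        by (rule order_trans[OF abs_min_le]) (simp add: t2 t3 max.bounded_iff)
      then show ?thesis using t1 by (simp add: max.bounded_iff)
    qed
    finally show "\<bar>genk l k u - genk l k v\<bar> \<le> dM u v" .
  qed
qed

lemma neg_ball: "k \<in> Lip0_ball \<Longrightarrow> (\<lambda>p. - k p) \<in> Lip0_ball"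
  by (rule ballI) (auto simp: ball_base ball_out ball_lip abs_minus_commute dest: ball_lip)

lemma genk_diff:
  assumes t: "0 < t" and l: "l = 2*t/5" and k: "k \<in> Lip0_ball"
    and van: "\<And>p. p \<in> Mset \<Longrightarrow> snd p \<le> t \<Longrightarrow> k p = 0"
  shows "genk l k p - genk l (\<lambda>p. - k p) p = (2*l/(1+l)) * k p"
proof (cases "p \<in> Mset")
  case False then show ?thesis unfolding genk_def using ball_out[OF k False] by simp
next
  case True
  note P = Mset_props[OF True]
  show ?thesis
  proof (cases "snd p \<le> t")
    case True2: True
    then show ?thesis unfolding genk_def using van[OF True True2] True by simp
  next
    case False
    have kb: "\<bar>k p\<bar> \<le> fst p + snd p" using ball_bound[OF k True] .
    have lpos: "0 < l" using t l by simp
    have bound: "l * (\<bar>k p\<bar> + fst p) \<le> snd p"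
    proof -
      have "\<bar>k p\<bar> + fst p \<le> 5/2" using kb P by linarith
      then have "l * (\<bar>k p\<bar> + fst p) \<le> l * (5/2)" using lpos by (intro mult_left_mono) auto
      also have "\<dots> = t" using l by simp
      finally show ?thesis using False by linarith
    qed
    have inact: "-(fst p + snd p) \<le> (s * l * k p - fst p)/(1+l) \<and> (s * l * k p - fst p)/(1+l) \<le> snd p - fst p"
      if s: "s = 1 \<or> s = -1" for s
    proof -
      have a1: "\<bar>s * l * k p\<bar> = l * \<bar>k p\<bar>" using s lpos by (auto simp: abs_mult)
      have "-(fst p + snd p) * (1+l) \<le> s * l * k p - fst p"
      proof -
        have "- (l * \<bar>k p\<bar>) \<le> s * l * k p" using a1 by linarith
        moreover have "-(fst p + snd p) * (1+l) = - fst p - snd p - l * fst p - l * snd p" by (simp add: algebra_simps)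
        moreover have "l * snd p \<ge> 0" "l * fst p \<ge> 0" using lpos P by simp_all
        ultimately show ?thesis using bound by (simp add: algebra_simps; linarith)
      qed
      moreover have "s * l * k p - fst p \<le> (snd p - fst p) * (1+l)"
      proof -
        have "s * l * k p \<le> l * \<bar>k p\<bar>" using a1 by linarith
        moreover have "(snd p - fst p) * (1+l) = snd p - fst p + l * snd p - l * fst p" by (simp add: algebra_simps)
        moreover have "l * snd p \<ge> 0" "l * fst p \<ge> 0" using lpos P by simp_all
        ultimately show ?thesis using bound by (simp add: algebra_simps; linarith)
      qed
      moreover have "1 + l > 0" using lpos by simp
      ultimately show ?thesis by (simp add: pos_le_divide_eq pos_divide_le_eq)
    qed
    have i1: "-(fst p + snd p) \<le> (l * k p - fst p)/(1+l)" "(l * k p - fst p)/(1+l) \<le> snd p - fst p"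
      using inact[of 1] unfolding mult_1 by simp_all
    have i2: "-(fst p + snd p) \<le> (l * - k p - fst p)/(1+l)" "(l * - k p - fst p)/(1+l) \<le> snd p - fst p"
    proof -
      have q: "(-1) * l * k p = l * - k p" by simp
      show "-(fst p + snd p) \<le> (l * - k p - fst p)/(1+l)" "(l * - k p - fst p)/(1+l) \<le> snd p - fst p"
        using inact[of "-1"] unfolding q by blast+
    qed
    have e1: "genk l k p = (l * k p - fst p)/(1+l)"
    proof -
      have "genk l k p = max (-(fst p + snd p)) (min (snd p - fst p) ((l * k p - fst p)/(1+l)))"
        unfolding genk_def using True by simp
      also have "\<dots> = (l * k p - fst p)/(1+l)" using i1 by (simp add: min_absorb2 max_absorb2)
      finally show ?thesis .
    qed
    have e2: "genk l (\<lambda>p. - k p) p = (l * - k p - fst p)/(1+l)"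
    proof -
      have "genk l (\<lambda>p. - k p) p = max (-(fst p + snd p)) (min (snd p - fst p) ((l * - k p - fst p)/(1+l)))"
        unfolding genk_def using True by simp
      also have "\<dots> = (l * - k p - fst p)/(1+l)" using i2 by (simp only: min_absorb2 max_absorb2)
      finally show ?thesis .
    qed
    have n: "(l * k p - fst p) - (l * - k p - fst p) = (2*l) * k p" by simp
    have "(l * k p - fst p)/(1+l) - (l * - k p - fst p)/(1+l) = ((l * k p - fst p) - (l * - k p - fst p))/(1+l)"
      by (rule diff_divide_distrib[symmetric])
    also have "\<dots> = (2*l/(1+l)) * k p" unfolding n by (simp only: times_divide_eq_left)
    finally show ?thesis unfolding e1 e2 .
  qed
qed



locale S =
  fixes \<epsilon> :: real and \<mu> :: "(real \<times> real \<Rightarrow> real) \<Rightarrow> real"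
  assumes e0: "0 < \<epsilon>" and e1: "\<epsilon> < 1"
    and free: "\<mu> \<in> FreeSp" and n1: "fnorm \<mu> \<le> 1"
    and hp: "fnorm (\<lambda>f. mol (0, 0) (1, 0) f + \<mu> f) < 1 + \<epsilon>^2 / 64"
    and hm: "fnorm (\<lambda>f. mol (0, 0) (1, 0) f - \<mu> f) < 1 + \<epsilon>^2 / 64"
    and hn: "fnorm \<mu> > 1 - \<epsilon>^2 / 64"
begin

abbreviation "\<eta> \<equiv> \<epsilon>^2 / 64"

lemma eta_pos: "0 < \<eta>" using e0 by simp

lemma eta_small: "\<eta> < 1/64"
proof -
  have "\<epsilon>^2 < 1" using e0 e1 by (simp add: power_less_one_iff abs_less_iff)
  then show ?thesis by simp
qed

lemma mbnd: "bnd \<mu>"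
  using mu_bnd[OF free] hn eta_small by linarith

lemma mol0: "mol (0,0) (1,0) f = f (0,0) - f (1,0)"
  unfolding mol_def dM_def by simp

lemma mol0_bnd: "bnd (mol (0,0) (1,0))"
proof (rule bndI)
  fix f assume f: "f \<in> Lip0_ball"
  show "\<bar>mol (0,0) (1,0) f\<bar> \<le> 1"
    unfolding mol0 using ball_lip[OF f base_in y_in] by (simp add: dM_def)
qed

lemma geo:
  assumes g: "g \<in> Lip0_ball" "g (1,0) = -1"
  shows "\<bar>\<mu> g\<bar> < \<eta>"
proof -
  have m: "mol (0,0) (1,0) g = 1" unfolding mol0 using ball_base[OF g(1)] g(2) by simp
  have "\<bar>mol (0,0) (1,0) g + \<mu> g\<bar> \<le> fnorm (\<lambda>f. mol (0, 0) (1, 0) f + \<mu> f)"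
    using fnorm_ge[OF bnd_add[OF mol0_bnd mbnd] g(1)] by simp
  moreover have "\<bar>mol (0,0) (1,0) g - \<mu> g\<bar> \<le> fnorm (\<lambda>f. mol (0, 0) (1, 0) f - \<mu> f)"
    using fnorm_ge[OF bnd_diff[OF mol0_bnd mbnd] g(1)] by simp
  ultimately show ?thesis using hp hm m by (simp add: abs_less_iff abs_le_iff) linarith
qed

lemma key:
  assumes t: "0 < t" and k: "k \<in> Lip0_ball"
    and van: "\<And>p. p \<in> Mset \<Longrightarrow> snd p \<le> t \<Longrightarrow> k p = 0"
  shows "\<bar>\<mu> k\<bar> \<le> \<eta> * (1 + 2*t/5) / (2*t/5)"
proof -
  define l where "l = 2*t/5"
  have lpos: "0 < l" using t l_def by simp
  have nk: "(\<lambda>p. - k p) \<in> Lip0_ball" by (rule neg_ball[OF k])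
  have gp: "genk l k \<in> Lip0_ball" "genk l k (1,0) = -1" using genk_ball[OF _ k] lpos by auto
  have gm: "genk l (\<lambda>p. - k p) \<in> Lip0_ball" "genk l (\<lambda>p. - k p) (1,0) = -1" using genk_ball[OF _ nk] lpos by auto
  define a where "a = (1+l)/(2*l)"
  have apos: "a > 0" using lpos a_def by simp
  have eq: "(\<lambda>p. a * genk l k p + (-a) * genk l (\<lambda>p. - k p) p) = k"
  proof
    fix p
    have "a * genk l k p + (-a) * genk l (\<lambda>p. - k p) p = a * (genk l k p - genk l (\<lambda>p. - k p) p)"
      by (simp add: algebra_simps)
    also have "\<dots> = a * ((2*l/(1+l)) * k p)" using genk_diff[OF t l_def k van] by simp
    also have "\<dots> = (a * (2*l/(1+l))) * k p" by (simp only: mult.assoc)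
    also have "a * (2*l/(1+l)) = 1"
    proof -
      have "1 + l \<noteq> 0" "l \<noteq> 0" using lpos by auto
      then show ?thesis unfolding a_def by simp
    qed
    also have "1 * k p = k p" by simp
    finally show "a * genk l k p + (-a) * genk l (\<lambda>p. - k p) p = k p" .
  qed
  have "\<mu> k = a * \<mu> (genk l k) + (-a) * \<mu> (genk l (\<lambda>p. - k p))"
    using mu_lin[OF free mbnd gp(1) gm(1), of a "-a"] unfolding eq using k by simp
  then have "\<bar>\<mu> k\<bar> \<le> a * \<bar>\<mu> (genk l k)\<bar> + a * \<bar>\<mu> (genk l (\<lambda>p. - k p))\<bar>"
    using apos by (simp add: abs_mult) (metis abs_mult abs_of_pos abs_triangle_ineq4 apos)
  also have "\<dots> \<le> a * \<eta> + a * \<eta>"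
    using geo[OF gp] geo[OF gm] apos by (intro add_mono mult_left_mono) auto
  also have "\<dots> = \<eta> * (1 + l) / l" unfolding a_def using lpos by (simp add: field_simps)
  finally show ?thesis unfolding l_def .
qed

end


definition Rt :: "real \<Rightarrow> real \<times> real \<Rightarrow> real \<times> real" where
  "Rt t p = (fst p, min (snd p) t)"

lemma min_pow: "min (1/(2::real)^n) (1/2^N) = 1/2^(max n N)"
proof (cases "n \<le> N")
  case True
  then have "(2::real)^n \<le> 2^N" by (intro power_increasing) auto
  then have "1/(2::real)^N \<le> 1/2^n" by (intro divide_left_mono) auto
  then show ?thesis using True by (simp add: min_def max_def)
next
  case False
  then have "(2::real)^N \<le> 2^n" by (intro power_increasing) auto
  then have "1/(2::real)^n \<le> 1/2^N" by (intro divide_left_mono) auto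
  then show ?thesis using False by (simp add: min_def max_def)
qed

lemma Rt_in:
  assumes p: "p \<in> Mset" and N: "N \<ge> 1" and t: "t = 1/2^N"
  shows "Rt t p \<in> Mset"
proof -
  from p consider (a) a n where "p = (a, 1/2^n)" "a \<in> {0..1}" "n \<ge> (1::nat)"
    | (b) a b where "p = (a,b)" "a \<in> {0,1}" "b \<in> {0..1/2}"
    unfolding Mset_def by blast
  then show ?thesis
  proof cases
    case a
    have "Rt t p = (a, 1/2^(max n N))" unfolding Rt_def a t using min_pow by simp
    then show ?thesis unfolding Mset_def using a by auto
  next
    case b
    have "t > 0" using t by simp
    then have "min b t \<in> {0..1/2}" using b by auto
    then show ?thesis unfolding Mset_def Rt_def using b by auto
  qed
qed

lemma Rt_lip:
  assumes p: "p \<in> Mset" and q: "q \<in> Mset" and t: "t > 0"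
  shows "dM (Rt t p) (Rt t q) \<le> dM p q"
  using Mset_props[OF p] Mset_props[OF q] t
  unfolding dM_def Rt_def by (auto simp: min_def abs_if)

lemma Rt_id: "snd p \<le> t \<Longrightarrow> Rt t p = p"
  unfolding Rt_def by (cases p) auto

lemma Rt_base: "t > 0 \<Longrightarrow> Rt t (0,0) = (0,0)"
  unfolding Rt_def by simp

definition fR :: "real \<Rightarrow> (real \<times> real \<Rightarrow> real) \<Rightarrow> real \<times> real \<Rightarrow> real" where
  "fR t f = (\<lambda>p. if p \<in> Mset then f (Rt t p) else 0)"

lemma fR_ball:
  assumes f: "f \<in> Lip0_ball" and N: "N \<ge> 1" and t: "t = 1/2^N"
  shows "fR t f \<in> Lip0_ball"
proof (rule ballI)
  have tp: "t > 0" using t by simp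
  show "fR t f (0,0) = 0" unfolding fR_def using base_in Rt_base[OF tp] ball_base[OF f] by simp
  show "\<And>p. p \<notin> Mset \<Longrightarrow> fR t f p = 0" unfolding fR_def by simp
  fix u v assume u: "u \<in> Mset" and v: "v \<in> Mset"
  have "\<bar>f (Rt t u) - f (Rt t v)\<bar> \<le> dM (Rt t u) (Rt t v)"
    using ball_lip[OF f Rt_in[OF u N t] Rt_in[OF v N t]] .
  also have "\<dots> \<le> dM u v" using Rt_lip[OF u v tp] .
  finally show "\<bar>fR t f u - fR t f v\<bar> \<le> dM u v" unfolding fR_def using u v by simp
qed

lemma half_ball:
  assumes f: "f \<in> Lip0_ball" and g: "g \<in> Lip0_ball"
  shows "(\<lambda>p. (1/2) * f p + (-1/2) * g p) \<in> Lip0_ball"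
proof (rule ballI)
  show "(1/2) * f (0,0) + (-1/2) * g (0,0) = 0" using ball_base[OF f] ball_base[OF g] by simp
  show "\<And>p. p \<notin> Mset \<Longrightarrow> (1/2) * f p + (-1/2) * g p = 0" using ball_out[OF f] ball_out[OF g] by simp
  fix u v assume u: "u \<in> Mset" and v: "v \<in> Mset"
  have "\<bar>f u - f v\<bar> \<le> dM u v" "\<bar>g u - g v\<bar> \<le> dM u v" using ball_lip[OF f u v] ball_lip[OF g u v] by auto
  then show "\<bar>((1/2) * f u + (-1/2) * g u) - ((1/2) * f v + (-1/2) * g v)\<bar> \<le> dM u v"
    by (simp add: abs_le_iff; linarith)
qed

context S begin

lemma retract_est:
  assumes f: "f \<in> Lip0_ball" and N: "N \<ge> 1" and t: "t = 1/2^N"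
  shows "\<bar>\<mu> f - \<mu> (fR t f)\<bar> \<le> 2 * (\<eta> * (1 + 2*t/5) / (2*t/5))"
proof -
  have tp: "t > 0" using t by simp
  have g: "fR t f \<in> Lip0_ball" by (rule fR_ball[OF f N t])
  define k where "k = (\<lambda>p. (1/2) * f p + (-1/2) * fR t f p)"
  have k: "k \<in> Lip0_ball" unfolding k_def by (rule half_ball[OF f g])
  have van: "k p = 0" if "p \<in> Mset" "snd p \<le> t" for p
    unfolding k_def fR_def using that Rt_id[OF that(2)] by simp
  have "\<mu> k = (1/2) * \<mu> f + (-1/2) * \<mu> (fR t f)"
    unfolding k_def by (rule mu_lin[OF free mbnd f g]) (use k k_def in simp)
  then have "\<mu> f - \<mu> (fR t f) = 2 * \<mu> k" by simp
  then show ?thesis using key[OF tp k van] by simp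
qed

end


definition SL :: "('a \<Rightarrow> real) set \<Rightarrow> (('a \<Rightarrow> real) \<Rightarrow> real) \<Rightarrow> bool" where
  "SL V p \<longleftrightarrow> (\<forall>u\<in>V. \<forall>v\<in>V. (\<lambda>z. u z + v z) \<in> V \<and> p (\<lambda>z. u z + v z) \<le> p u + p v) \<and>
     (\<forall>u\<in>V. \<forall>r. (\<lambda>z. r * u z) \<in> V) \<and> (\<forall>u\<in>V. \<forall>r>0. p (\<lambda>z. r * u z) = r * p u)"

definition props :: "('a \<Rightarrow> real) set \<Rightarrow> (('a \<Rightarrow> real) \<Rightarrow> real) \<Rightarrow> (('a \<Rightarrow> real) \<times> real) set \<Rightarrow> bool" where
  "props V p G \<longleftrightarrow> (\<forall>(v,l)\<in>G. v \<in> V \<and> l \<le> p v) \<and> ((\<lambda>z. 0), 0) \<in> G \<and>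
     (\<forall>(v1,l1)\<in>G. \<forall>(v2,l2)\<in>G. ((\<lambda>z. v1 z + v2 z), l1 + l2) \<in> G) \<and>
     (\<forall>(v,l)\<in>G. \<forall>r>0. ((\<lambda>z. r * v z), r * l) \<in> G)"

lemma SL_add: "SL V p \<Longrightarrow> u \<in> V \<Longrightarrow> v \<in> V \<Longrightarrow> p (\<lambda>z. u z + v z) \<le> p u + p v"
  unfolding SL_def by blast
lemma SL_addV: "SL V p \<Longrightarrow> u \<in> V \<Longrightarrow> v \<in> V \<Longrightarrow> (\<lambda>z. u z + v z) \<in> V"
  unfolding SL_def by blast
lemma SL_scaleV: "SL V p \<Longrightarrow> u \<in> V \<Longrightarrow> (\<lambda>z. r * u z) \<in> V"
  unfolding SL_def by blast
lemma SL_hom: "SL V p \<Longrightarrow> u \<in> V \<Longrightarrow> r > 0 \<Longrightarrow> p (\<lambda>z. r * u z) = r * p u"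
  unfolding SL_def by blast

lemma props_mem: "props V p G \<Longrightarrow> (v,l) \<in> G \<Longrightarrow> v \<in> V \<and> l \<le> p v"
  unfolding props_def by blast
lemma props_zero: "props V p G \<Longrightarrow> ((\<lambda>z. 0), 0) \<in> G"
  unfolding props_def by blast
lemma props_add: "props V p G \<Longrightarrow> (v1,l1) \<in> G \<Longrightarrow> (v2,l2) \<in> G \<Longrightarrow> ((\<lambda>z. v1 z + v2 z), l1 + l2) \<in> G"
  unfolding props_def by blast
lemma props_scale: "props V p G \<Longrightarrow> (v,l) \<in> G \<Longrightarrow> r > 0 \<Longrightarrow> ((\<lambda>z. r * v z), r * l) \<in> G"
  unfolding props_def by blast

lemma hb_step:
  assumes sl: "SL V p" and pr: "props V p G" and w: "w \<in> V"
  shows "\<exists>c. \<forall>(v,l)\<in>G. \<forall>t. l + t*c \<le> p (\<lambda>z. v z + t * w z)"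
proof -
  define S where "S = {l - p (\<lambda>z. v z + (-1) * w z) | v l. (v,l) \<in> G}"
  have mw: "(\<lambda>z. (-1) * w z) \<in> V" using SL_scaleV[OF sl w] .
  have key: "l1 - p (\<lambda>z. v1 z + (-1) * w z) \<le> p (\<lambda>z. v2 z + w z) - l2"
    if "(v1,l1) \<in> G" "(v2,l2) \<in> G" for v1 l1 v2 l2
  proof -
    have s: "((\<lambda>z. v1 z + v2 z), l1 + l2) \<in> G" by (rule props_add[OF pr that])
    have v1: "v1 \<in> V" and v2: "v2 \<in> V" using props_mem[OF pr that(1)] props_mem[OF pr that(2)] by auto
    have a: "(\<lambda>z. v1 z + (-1) * w z) \<in> V" using SL_addV[OF sl v1 mw] .
    have b: "(\<lambda>z. v2 z + w z) \<in> V" using SL_addV[OF sl v2 w] .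
    have "l1 + l2 \<le> p (\<lambda>z. v1 z + v2 z)" using props_mem[OF pr s] by simp
    also have "(\<lambda>z. v1 z + v2 z) = (\<lambda>z. (v1 z + (-1) * w z) + (v2 z + w z))" by auto
    also have "p \<dots> \<le> p (\<lambda>z. v1 z + (-1) * w z) + p (\<lambda>z. v2 z + w z)" using SL_add[OF sl a b] .
    finally show ?thesis by simp
  qed
  have ne: "S \<noteq> {}" unfolding S_def using props_zero[OF pr] by blast
  have bdd: "bdd_above S"
    unfolding S_def bdd_above_def using key[OF _ props_zero[OF pr]] by auto
  define c where "c = Sup S"
  have upper: "l - p (\<lambda>z. v z + (-1) * w z) \<le> c" if "(v,l) \<in> G" for v l
    unfolding c_def by (rule cSup_upper[OF _ bdd]) (use that S_def in blast)
  have lower: "c \<le> p (\<lambda>z. v z + w z) - l" if "(v,l) \<in> G" for v l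
    unfolding c_def by (rule cSup_least[OF ne]) (use key[OF _ that] S_def in blast)
  have "l + t*c \<le> p (\<lambda>z. v z + t * w z)" if vl: "(v,l) \<in> G" for v l t
  proof -
    have vV: "v \<in> V" using props_mem[OF pr vl] by simp
    consider "t > 0" | "t = 0" | "t < 0" by linarith
    then show ?thesis
    proof cases
      case 1
      have g: "((\<lambda>z. (1/t) * v z), (1/t) * l) \<in> G" by (rule props_scale[OF pr vl]) (use 1 in simp)
      have "c \<le> p (\<lambda>z. (1/t) * v z + w z) - (1/t) * l" using lower[OF g] .
      then have "t * c \<le> t * p (\<lambda>z. (1/t) * v z + w z) - l" using 1 by (simp add: field_simps)
      also have "t * p (\<lambda>z. (1/t) * v z + w z) = p (\<lambda>z. t * ((1/t) * v z + w z))"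
        by (rule sym, rule SL_hom[OF sl SL_addV[OF sl SL_scaleV[OF sl vV, of "1/t"] w] 1])
      also have "(\<lambda>z. t * ((1/t) * v z + w z)) = (\<lambda>z. v z + t * w z)" using 1 by (auto simp: field_simps)
      finally show ?thesis by simp
    next
      case 2 then show ?thesis using props_mem[OF pr vl] by simp
    next
      case 3
      define s where "s = -t"
      have s: "s > 0" using 3 s_def by simp
      have g: "((\<lambda>z. (1/s) * v z), (1/s) * l) \<in> G" by (rule props_scale[OF pr vl]) (use s in simp)
      have "(1/s) * l - p (\<lambda>z. (1/s) * v z + (-1) * w z) \<le> c" using upper[OF g] .
      then have "l - s * p (\<lambda>z. (1/s) * v z + (-1) * w z) \<le> s * c" using s by (simp add: field_simps)
      also have "s * p (\<lambda>z. (1/s) * v z + (-1) * w z) = p (\<lambda>z. s * ((1/s) * v z + (-1) * w z))"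
        by (rule sym, rule SL_hom[OF sl SL_addV[OF sl SL_scaleV[OF sl vV, of "1/s"] mw] s])
      also have "(\<lambda>z. s * ((1/s) * v z + (-1) * w z)) = (\<lambda>z. v z + t * w z)" using s s_def by (auto simp: field_simps)
      finally show ?thesis unfolding s_def by simp
    qed
  qed
  then show ?thesis by blast
qed


definition extG :: "(('a \<Rightarrow> real) \<times> real) set \<Rightarrow> ('a \<Rightarrow> real) \<Rightarrow> real \<Rightarrow> (('a \<Rightarrow> real) \<times> real) set" where
  "extG G w c = {((\<lambda>z. v z + t * w z), l + t * c) | v l t. (v,l) \<in> G}"

definition dirs :: "(('a \<Rightarrow> real) \<times> real) set \<Rightarrow> ('a \<Rightarrow> real) \<Rightarrow> real \<Rightarrow> bool" where
  "dirs G w c \<longleftrightarrow> (\<forall>(v,l)\<in>G. \<forall>t. ((\<lambda>z. v z + t * w z), l + t * c) \<in> G)"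

lemma extG_memI: "(v,l) \<in> G \<Longrightarrow> ((\<lambda>z. v z + t * w z), l + t * c) \<in> extG G w c"
  unfolding extG_def by blast

lemma extG_sub: "G \<subseteq> extG G w c"
proof
  fix x assume "x \<in> G"
  then obtain v l where x: "x = (v,l)" "(v,l) \<in> G" by (cases x) auto
  have "((\<lambda>z. v z + 0 * w z), l + 0 * c) \<in> extG G w c" unfolding extG_def using x by blast
  then show "x \<in> extG G w c" using x by simp
qed

lemma props_ext:
  assumes sl: "SL V p" and pr: "props V p G" and w: "w \<in> V"
    and c: "\<forall>(v,l)\<in>G. \<forall>t. l + t*c \<le> p (\<lambda>z. v z + t * w z)"
  shows "props V p (extG G w c)"
  unfolding props_def
proof (intro conjI)
  show "\<forall>(v, l)\<in>extG G w c. v \<in> V \<and> l \<le> p v"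
  proof (clarify)
    fix v' l' assume "(v', l') \<in> extG G w c"
    then obtain v l t where e: "v' = (\<lambda>z. v z + t * w z)" "l' = l + t * c" "(v,l) \<in> G"
      unfolding extG_def by blast
    have "v \<in> V" using props_mem[OF pr e(3)] by simp
    then have "v' \<in> V" unfolding e(1) using SL_addV[OF sl _ SL_scaleV[OF sl w]] by blast
    moreover have "l' \<le> p v'" using c e by blast
    ultimately show "v' \<in> V \<and> l' \<le> p v'" by simp
  qed
  show "((\<lambda>z. 0), 0) \<in> extG G w c" using extG_sub props_zero[OF pr] by blast
  show "\<forall>(v1, l1)\<in>extG G w c. \<forall>(v2, l2)\<in>extG G w c. ((\<lambda>z. v1 z + v2 z), l1 + l2) \<in> extG G w c"
  proof (clarify)
    fix v1' l1' v2' l2' assume a1: "(v1', l1') \<in> extG G w c" and a2: "(v2', l2') \<in> extG G w c"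
    obtain v1 l1 t1 where e1: "v1' = (\<lambda>z. v1 z + t1 * w z)" "l1' = l1 + t1 * c" "(v1,l1) \<in> G"
      using a1 unfolding extG_def by blast
    obtain v2 l2 t2 where e2: "v2' = (\<lambda>z. v2 z + t2 * w z)" "l2' = l2 + t2 * c" "(v2,l2) \<in> G"
      using a2 unfolding extG_def by blast
    have s: "((\<lambda>z. v1 z + v2 z), l1 + l2) \<in> G" by (rule props_add[OF pr e1(3) e2(3)])
    have "((\<lambda>z. (v1 z + v2 z) + (t1 + t2) * w z), (l1 + l2) + (t1 + t2) * c) \<in> extG G w c"
      using extG_memI[OF s] by simp
    moreover have "(\<lambda>z. (v1 z + v2 z) + (t1 + t2) * w z) = (\<lambda>z. v1' z + v2' z)"
      unfolding e1 e2 by (auto simp: algebra_simps)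
    moreover have "(l1 + l2) + (t1 + t2) * c = l1' + l2'" unfolding e1 e2 by (simp add: algebra_simps)
    ultimately show "((\<lambda>z. v1' z + v2' z), l1' + l2') \<in> extG G w c" by simp
  qed
  show "\<forall>(v, l)\<in>extG G w c. \<forall>r>0. ((\<lambda>z. r * v z), r * l) \<in> extG G w c"
  proof (clarify)
    fix v' l' r assume a: "(v', l') \<in> extG G w c" and r: "(0::real) < r"
    obtain v l t where e: "v' = (\<lambda>z. v z + t * w z)" "l' = l + t * c" "(v,l) \<in> G"
      using a unfolding extG_def by blast
    have s: "((\<lambda>z. r * v z), r * l) \<in> G" by (rule props_scale[OF pr e(3) r])
    have "((\<lambda>z. r * v z + (r * t) * w z), r * l + (r * t) * c) \<in> extG G w c"
      using extG_memI[OF s] by simp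
    moreover have "(\<lambda>z. r * v z + (r * t) * w z) = (\<lambda>z. r * v' z)" unfolding e by (auto simp: algebra_simps)
    moreover have "r * l + (r * t) * c = r * l'" unfolding e by (simp add: algebra_simps)
    ultimately show "((\<lambda>z. r * v' z), r * l') \<in> extG G w c" by simp
  qed
qed

lemma dirs_ext_new: "dirs (extG G w c) w c"
  unfolding dirs_def
proof (clarify)
  fix v' l' s assume a: "(v', l') \<in> extG G w c"
  obtain v l t where e: "v' = (\<lambda>z. v z + t * w z)" "l' = l + t * c" "(v,l) \<in> G"
    using a unfolding extG_def by blast
  have "((\<lambda>z. v z + (t + s) * w z), l + (t + s) * c) \<in> extG G w c" unfolding extG_def using e(3) by blast
  moreover have "(\<lambda>z. v z + (t + s) * w z) = (\<lambda>z. v' z + s * w z)" unfolding e by (auto simp: algebra_simps)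
  moreover have "l + (t + s) * c = l' + s * c" unfolding e by (simp add: algebra_simps)
  ultimately show "((\<lambda>z. v' z + s * w z), l' + s * c) \<in> extG G w c" by simp
qed

lemma dirs_ext_old: "dirs G w' c' \<Longrightarrow> dirs (extG G w c) w' c'"
  unfolding dirs_def
proof (clarify)
  fix v' l' s assume d: "\<forall>(v, l)\<in>G. \<forall>t. ((\<lambda>z. v z + t * w' z), l + t * c') \<in> G" and a: "(v', l') \<in> extG G w c"
  obtain v l t where e: "v' = (\<lambda>z. v z + t * w z)" "l' = l + t * c" "(v,l) \<in> G"
    using a unfolding extG_def by blast
  have g: "((\<lambda>z. v z + s * w' z), l + s * c') \<in> G" using d e(3) by blast
  have "((\<lambda>z. (v z + s * w' z) + t * w z), (l + s * c') + t * c) \<in> extG G w c" using extG_memI[OF g] by simp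
  moreover have "(\<lambda>z. (v z + s * w' z) + t * w z) = (\<lambda>z. v' z + s * w' z)" unfolding e by (auto simp: algebra_simps)
  moreover have "(l + s * c') + t * c = l' + s * c'" unfolding e by (simp add: algebra_simps)
  ultimately show "((\<lambda>z. v' z + s * w' z), l' + s * c') \<in> extG G w c" by simp
qed

lemma hb_list:
  assumes sl: "SL V p"
  shows "props V p G \<Longrightarrow> set ws \<subseteq> V \<Longrightarrow> \<exists>cf G'. props V p G' \<and> G \<subseteq> G' \<and> (\<forall>w\<in>set ws. dirs G' w (cf w))"
proof (induction ws arbitrary: G)
  case Nil
  show ?case by (rule exI[where x="\<lambda>_. 0"], rule exI[where x=G]) (use Nil in simp)
next
  case (Cons w ws)
  obtain cf G'' where h: "props V p G''" "G \<subseteq> G''" "\<forall>w\<in>set ws. dirs G'' w (cf w)"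
    using Cons.IH[OF Cons.prems(1)] Cons.prems(2) by auto
  have wV: "w \<in> V" using Cons.prems(2) by simp
  obtain c where c: "\<forall>(v,l)\<in>G''. \<forall>t. l + t*c \<le> p (\<lambda>z. v z + t * w z)"
    using hb_step[OF sl h(1) wV] by blast
  let ?G' = "extG G'' w c"
  have "props V p ?G'" by (rule props_ext[OF sl h(1) wV c])
  moreover have "G \<subseteq> ?G'" using h(2) extG_sub by blast
  moreover have "\<forall>w'\<in>set (w # ws). dirs ?G' w' ((cf(w := c)) w')"
  proof
    fix w' assume "w' \<in> set (w # ws)"
    then show "dirs ?G' w' ((cf(w := c)) w')"
    proof (cases "w' = w")
      case True then show ?thesis using dirs_ext_new by simp
    next
      case False
      then have "w' \<in> set ws" using \<open>w' \<in> set (w # ws)\<close> by simp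
      then show ?thesis using dirs_ext_old[of G'' w' "cf w'" w c] h(3) False by simp
    qed
  qed
  ultimately show ?case by blast
qed



type_synonym pt = "real \<times> real"

definition ind :: "pt \<Rightarrow> pt \<Rightarrow> real" where "ind u = (\<lambda>z. if z = u then 1 else 0)"

definition mv :: "real \<times> pt \<times> pt \<Rightarrow> pt \<Rightarrow> real" where
  "mv x z = fst x * (ind (fst (snd x)) z - ind (snd (snd x)) z) / dM (fst (snd x)) (snd (snd x))"

definition Dm :: "(real \<times> pt \<times> pt) list \<Rightarrow> pt \<Rightarrow> real" where
  "Dm xs = (\<lambda>z. sum_list (map (\<lambda>x. mv x z) xs))"

definition wt :: "(real \<times> pt \<times> pt) list \<Rightarrow> real" where
  "wt xs = sum_list (map fst xs)"

definition valid :: "pt set \<Rightarrow> (real \<times> pt \<times> pt) list \<Rightarrow> bool" where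
  "valid Z xs \<longleftrightarrow> (\<forall>x\<in>set xs. 0 \<le> fst x \<and> fst (snd x) \<in> Z \<and> snd (snd x) \<in> Z \<and> fst (snd x) \<noteq> snd (snd x))"

definition Rep :: "pt set \<Rightarrow> (pt \<Rightarrow> real) \<Rightarrow> bool" where
  "Rep Z \<rho> \<longleftrightarrow> (\<exists>xs. valid Z xs \<and> Dm xs = \<rho>)"

definition Wd :: "pt set \<Rightarrow> (pt \<Rightarrow> real) \<Rightarrow> real" where
  "Wd Z \<rho> = Inf {wt xs | xs. valid Z xs \<and> Dm xs = \<rho>}"

definition sc :: "real \<Rightarrow> (real \<times> pt \<times> pt) list \<Rightarrow> (real \<times> pt \<times> pt) list" where
  "sc r xs = map (\<lambda>x. (r * fst x, snd x)) xs"

definition fl :: "(real \<times> pt \<times> pt) list \<Rightarrow> (real \<times> pt \<times> pt) list" where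
  "fl xs = map (\<lambda>x. (fst x, snd (snd x), fst (snd x))) xs"

lemma Dm_app: "Dm (xs @ ys) = (\<lambda>z. Dm xs z + Dm ys z)"
  unfolding Dm_def by simp

lemma wt_app: "wt (xs @ ys) = wt xs + wt ys"
  unfolding wt_def by simp

lemma Dm_nil: "Dm [] = (\<lambda>z. 0)" unfolding Dm_def by simp
lemma wt_nil: "wt [] = 0" unfolding wt_def by simp

lemma mv_sc: "mv (r * fst x, snd x) z = r * mv x z"
  unfolding mv_def by simp

lemma mv_fl0: "mv (a, v, u) z = - mv (a, u, v) z"
proof -
  have e: "a * (ind u z - ind v z) = - (a * (ind v z - ind u z))" by (simp add: algebra_simps)
  show ?thesis unfolding mv_def fst_conv snd_conv dM_sym[of v u] e minus_divide_left by simp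
qed

lemma mv_fl: "mv (fst x, snd (snd x), fst (snd x)) z = - mv x z"
proof -
  obtain a u v where x: "x = (a,u,v)" by (cases x) auto
  show ?thesis unfolding x fst_conv snd_conv by (rule mv_fl0)
qed

lemma Dm_sc_pt: "Dm (sc r xs) z = r * Dm xs z"
  unfolding Dm_def sc_def by (induction xs) (auto simp: mv_sc distrib_left)

lemma Dm_sc: "Dm (sc r xs) = (\<lambda>z. r * Dm xs z)"
  using Dm_sc_pt by blast

lemma wt_sc: "wt (sc r xs) = r * wt xs"
  unfolding wt_def sc_def by (induction xs) (auto simp: algebra_simps)

lemma Dm_fl_pt: "Dm (fl xs) z = - Dm xs z"
  unfolding Dm_def fl_def by (induction xs) (auto simp: mv_fl)

lemma Dm_fl: "Dm (fl xs) = (\<lambda>z. - Dm xs z)"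
  using Dm_fl_pt by blast

lemma wt_fl: "wt (fl xs) = wt xs"
  unfolding wt_def fl_def by (induction xs) auto

lemma valid_app: "valid Z xs \<Longrightarrow> valid Z ys \<Longrightarrow> valid Z (xs @ ys)"
  unfolding valid_def by auto
lemma valid_sc: "valid Z xs \<Longrightarrow> r \<ge> 0 \<Longrightarrow> valid Z (sc r xs)"
  unfolding valid_def sc_def by auto
lemma valid_fl: "valid Z xs \<Longrightarrow> valid Z (fl xs)"
  unfolding valid_def fl_def by auto
lemma valid_nil: "valid Z []" unfolding valid_def by simp

lemma wt_nonneg: "valid Z xs \<Longrightarrow> 0 \<le> wt xs"
  unfolding valid_def wt_def by (induction xs) auto

lemma Wd_lower: "valid Z xs \<Longrightarrow> Dm xs = \<rho> \<Longrightarrow> Wd Z \<rho> \<le> wt xs"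
  unfolding Wd_def
  by (rule cInf_lower) (auto simp: bdd_below_def intro!: exI[where x=0] wt_nonneg)

lemma Wd_ge: "Rep Z \<rho> \<Longrightarrow> (\<And>xs. valid Z xs \<Longrightarrow> Dm xs = \<rho> \<Longrightarrow> c \<le> wt xs) \<Longrightarrow> c \<le> Wd Z \<rho>"
  unfolding Wd_def Rep_def by (rule cInf_greatest) auto

lemma Wd_nonneg: "Rep Z \<rho> \<Longrightarrow> 0 \<le> Wd Z \<rho>"
  by (rule Wd_ge) (auto intro: wt_nonneg)

lemma Rep_zero: "Rep Z (\<lambda>z. 0)"
  unfolding Rep_def using valid_nil Dm_nil by blast

lemma Wd_zero: "Wd Z (\<lambda>z. 0) = 0"
  using Wd_lower[OF valid_nil[of Z] Dm_nil] wt_nil Wd_nonneg[OF Rep_zero, of Z] by linarith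

lemma Rep_add: "Rep Z \<rho>1 \<Longrightarrow> Rep Z \<rho>2 \<Longrightarrow> Rep Z (\<lambda>z. \<rho>1 z + \<rho>2 z)"
  unfolding Rep_def using valid_app Dm_app by metis

lemma Rep_scale: "Rep Z \<rho> \<Longrightarrow> Rep Z (\<lambda>z. r * \<rho> z)"
proof -
  assume "Rep Z \<rho>"
  then obtain xs where xs: "valid Z xs" "Dm xs = \<rho>" unfolding Rep_def by blast
  show ?thesis
  proof (cases "r \<ge> 0")
    case True
    then show ?thesis unfolding Rep_def using valid_sc[OF xs(1) True] Dm_sc xs(2) by metis
  next
    case False
    have "valid Z (sc (-r) (fl xs))" using valid_sc[OF valid_fl[OF xs(1)]] False by simp
    moreover have "Dm (sc (-r) (fl xs)) = (\<lambda>z. r * \<rho> z)" unfolding Dm_sc Dm_fl xs(2) by simp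
    ultimately show ?thesis unfolding Rep_def by blast
  qed
qed

lemma Wd_add: "Rep Z \<rho>1 \<Longrightarrow> Rep Z \<rho>2 \<Longrightarrow> Wd Z (\<lambda>z. \<rho>1 z + \<rho>2 z) \<le> Wd Z \<rho>1 + Wd Z \<rho>2"
proof -
  assume r1: "Rep Z \<rho>1" and r2: "Rep Z \<rho>2"
  have "Wd Z (\<lambda>z. \<rho>1 z + \<rho>2 z) - Wd Z \<rho>2 \<le> wt xs1" if x1: "valid Z xs1" "Dm xs1 = \<rho>1" for xs1
  proof -
    have "Wd Z (\<lambda>z. \<rho>1 z + \<rho>2 z) - wt xs1 \<le> Wd Z \<rho>2"
    proof (rule Wd_ge[OF r2])
      fix xs2 assume x2: "valid Z xs2" "Dm xs2 = \<rho>2"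
      have "Wd Z (\<lambda>z. \<rho>1 z + \<rho>2 z) \<le> wt (xs1 @ xs2)"
        by (rule Wd_lower[OF valid_app[OF x1(1) x2(1)]]) (simp add: Dm_app x1(2) x2(2))
      then show "Wd Z (\<lambda>z. \<rho>1 z + \<rho>2 z) - wt xs1 \<le> wt xs2" by (simp add: wt_app)
    qed
    then show ?thesis by simp
  qed
  then have "Wd Z (\<lambda>z. \<rho>1 z + \<rho>2 z) - Wd Z \<rho>2 \<le> Wd Z \<rho>1" by (intro Wd_ge[OF r1]) auto
  then show ?thesis by simp
qed

lemma Wd_hom: assumes r: "r > 0" and rep: "Rep Z \<rho>" shows "Wd Z (\<lambda>z. r * \<rho> z) = r * Wd Z \<rho>"
proof (rule order.antisym)
  have "Wd Z (\<lambda>z. r * \<rho> z) / r \<le> Wd Z \<rho>"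
  proof (rule Wd_ge[OF rep])
    fix xs assume x: "valid Z xs" "Dm xs = \<rho>"
    have "Wd Z (\<lambda>z. r * \<rho> z) \<le> wt (sc r xs)"
      by (rule Wd_lower[OF valid_sc[OF x(1)]]) (use r x(2) Dm_sc in auto)
    then show "Wd Z (\<lambda>z. r * \<rho> z) / r \<le> wt xs" using r by (simp add: wt_sc field_simps)
  qed
  then show "Wd Z (\<lambda>z. r * \<rho> z) \<le> r * Wd Z \<rho>" using r by (simp add: field_simps)
  have "Wd Z \<rho> \<le> Wd Z (\<lambda>z. r * \<rho> z) / r"
  proof -
    have "Wd Z \<rho> * r \<le> Wd Z (\<lambda>z. r * \<rho> z)"
    proof (rule Wd_ge[OF Rep_scale[OF rep]])
      fix xs assume x: "valid Z xs" "Dm xs = (\<lambda>z. r * \<rho> z)"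
      have "Dm (sc (1/r) xs) = \<rho>" unfolding Dm_sc x(2) using r by auto
      then have "Wd Z \<rho> \<le> wt (sc (1/r) xs)" using Wd_lower[OF valid_sc[OF x(1)]] r by simp
      then show "Wd Z \<rho> * r \<le> wt xs" using r by (simp add: wt_sc field_simps)
    qed
    then show ?thesis using r by (simp add: field_simps)
  qed
  then show "r * Wd Z \<rho> \<le> Wd Z (\<lambda>z. r * \<rho> z)" using r by (simp add: field_simps)
qed

lemma SL_Wd: "SL {\<rho>. Rep Z \<rho>} (Wd Z)"
  unfolding SL_def mem_Collect_eq
  using Rep_add[of Z] Wd_add[of Z] Rep_scale[of Z] Wd_hom[of _ Z] by blast

lemma Wd_mol:
  assumes "Z \<subseteq> Mset" "u \<in> Z" "v \<in> Z" "u \<noteq> v"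
  shows "Wd Z (\<lambda>z. ind u z - ind v z) \<le> dM u v"
proof -
  have "u \<in> Mset" "v \<in> Mset" using assms by auto
  then have d: "dM u v \<noteq> 0" using dM_pos[of u v] assms by auto
  have "valid Z [(dM u v, u, v)]" unfolding valid_def using assms dM_nonneg[of u v] by auto
  moreover have "Dm [(dM u v, u, v)] = (\<lambda>z. ind u z - ind v z)"
    unfolding Dm_def mv_def using d by auto
  ultimately show ?thesis using Wd_lower wt_def by fastforce
qed

lemma Rep_mol:
  assumes "u \<in> Z" "v \<in> Z" "Z \<subseteq> Mset"
  shows "Rep Z (\<lambda>z. ind u z - ind v z)"
proof (cases "u = v")
  case True
  then show ?thesis using Rep_zero by simp
next
  case False
  have "u \<in> Mset" "v \<in> Mset" using assms by auto
  then have d: "dM u v \<noteq> 0" using dM_pos[of u v] False by auto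
  have "valid Z [(dM u v, u, v)]" unfolding valid_def using assms False dM_nonneg[of u v] by auto
  moreover have "Dm [(dM u v, u, v)] = (\<lambda>z. ind u z - ind v z)"
    unfolding Dm_def mv_def using d by auto
  ultimately show ?thesis unfolding Rep_def by blast
qed



lemma Rep_sum:
  fixes n :: nat
  assumes "\<forall>i<n. Rep Z (w i)"
  shows "Rep Z (\<lambda>z. \<Sum>i<n. c i * w i z)"
  using assms
proof (induction n)
  case 0 then show ?case using Rep_zero by simp
next
  case (Suc n)
  have a: "Rep Z (\<lambda>z. \<Sum>i<n. c i * w i z)" using Suc by simp
  have b: "Rep Z (\<lambda>z. c n * w n z)" using Rep_scale Suc.prems by simp
  show ?case using Rep_add[OF a b] by simp
qed

lemma dirsD: "dirs G w c \<Longrightarrow> (v,l) \<in> G \<Longrightarrow> ((\<lambda>z. v z + t * w z), l + t * c) \<in> G"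
  unfolding dirs_def by fast

lemma duality:
  fixes n :: nat
  assumes Z: "finite Z" "Z \<subseteq> Mset" "x0 \<in> Z" and q: "\<forall>i<n. q i \<in> Z"
  shows "\<exists>f. (\<forall>u\<in>Z. \<forall>v\<in>Z. f u - f v \<le> dM u v) \<and>
    Wd Z (\<lambda>z. \<Sum>i<n. c i * (ind (q i) z - ind x0 z)) \<le> (\<Sum>i<n. c i * (f (q i) - f x0))"
proof -
  let ?V = "{\<rho>. Rep Z \<rho>}" and ?p = "Wd Z"
  have sl: "SL ?V ?p" by (rule SL_Wd)
  define e where "e z = (\<lambda>y. ind z y - ind x0 y)" for z
  have eV: "e z \<in> ?V" if "z \<in> Z" for z unfolding e_def using Rep_mol[OF that Z(3) Z(2)] by simp
  define \<rho> where "\<rho> = (\<lambda>z. \<Sum>i<n. c i * e (q i) z)"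
  have rho: "Rep Z \<rho>" unfolding \<rho>_def by (rule Rep_sum) (use eV q in auto)
  define G0 where "G0 = {((\<lambda>z. r * \<rho> z), r * Wd Z \<rho>) | r. True}"
  have pr0: "props ?V ?p G0"
    unfolding props_def
  proof (intro conjI)
    show "\<forall>(v, l)\<in>G0. v \<in> ?V \<and> l \<le> ?p v"
    proof clarify
      fix v l assume "(v,l) \<in> G0"
      then obtain r where r: "v = (\<lambda>z. r * \<rho> z)" "l = r * Wd Z \<rho>" unfolding G0_def by blast
      have "v \<in> ?V" unfolding r using Rep_scale[OF rho] by simp
      moreover have "l \<le> ?p v"
      proof -
        consider "r > 0" | "r = 0" | "r < 0" by linarith
        then show ?thesis
        proof cases
          case 1 then show ?thesis unfolding r using Wd_hom[OF 1 rho] by simp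
        next
          case 2 then show ?thesis unfolding r using Wd_zero by simp
        next
          case 3
          have "r * Wd Z \<rho> \<le> 0" using 3 Wd_nonneg[OF rho] by (simp add: mult_nonpos_nonneg)
          also have "0 \<le> Wd Z (\<lambda>z. r * \<rho> z)" by (rule Wd_nonneg[OF Rep_scale[OF rho]])
          finally show ?thesis unfolding r .
        qed
      qed
      ultimately show "v \<in> ?V \<and> l \<le> ?p v" by simp
    qed
    have "((\<lambda>z. 0 * \<rho> z), 0 * Wd Z \<rho>) \<in> G0" unfolding G0_def by blast
    then show "((\<lambda>z. 0), 0) \<in> G0" by simp
    show "\<forall>(v1, l1)\<in>G0. \<forall>(v2, l2)\<in>G0. ((\<lambda>z. v1 z + v2 z), l1 + l2) \<in> G0"
    proof clarify
      fix v1 l1 v2 l2 assume "(v1,l1) \<in> G0" "(v2,l2) \<in> G0"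
      then obtain r1 r2 where r: "v1 = (\<lambda>z. r1 * \<rho> z)" "l1 = r1 * Wd Z \<rho>" "v2 = (\<lambda>z. r2 * \<rho> z)" "l2 = r2 * Wd Z \<rho>"
        unfolding G0_def by blast
      have "((\<lambda>z. (r1 + r2) * \<rho> z), (r1 + r2) * Wd Z \<rho>) \<in> G0" unfolding G0_def by blast
      then show "((\<lambda>z. v1 z + v2 z), l1 + l2) \<in> G0" unfolding r by (simp add: algebra_simps)
    qed
    show "\<forall>(v, l)\<in>G0. \<forall>s>0. ((\<lambda>z. s * v z), s * l) \<in> G0"
    proof clarify
      fix v l and s :: real assume "(v,l) \<in> G0" "0 < s"
      then obtain r where r: "v = (\<lambda>z. r * \<rho> z)" "l = r * Wd Z \<rho>" unfolding G0_def by blast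
      have "((\<lambda>z. (s * r) * \<rho> z), (s * r) * Wd Z \<rho>) \<in> G0" unfolding G0_def by blast
      then show "((\<lambda>z. s * v z), s * l) \<in> G0" unfolding r by (simp add: algebra_simps)
    qed
  qed
  have fe: "finite (e ` Z)" using Z(1) by simp
  obtain ws where ws: "set ws = e ` Z" using finite_list[OF fe] by blast
  have wsV: "set ws \<subseteq> ?V" unfolding ws using eV by auto
  obtain cf G' where G': "props ?V ?p G'" "G0 \<subseteq> G'" "\<forall>w\<in>set ws. dirs G' w (cf w)"
    using hb_list[OF sl pr0 wsV] by blast
  define f where "f z = cf (e z)" for z
  have dz: "dirs G' (e z) (f z)" if "z \<in> Z" for z
  proof -
    have "e z \<in> set ws" unfolding ws using that by blast
    then show ?thesis unfolding f_def using G'(3) by blast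
  qed
  have dirI: "((\<lambda>y. v y + t * e z y), l + t * f z) \<in> G'" if "(v,l) \<in> G'" "z \<in> Z" for v l t z
    by (rule dirsD[OF dz[OF that(2)] that(1)])
  have le: "l \<le> Wd Z v" if "(v,l) \<in> G'" for v l using props_mem[OF G'(1) that] by simp
  have zero: "((\<lambda>y. 0), 0) \<in> G'" by (rule props_zero[OF G'(1)])
  have e0: "e x0 = (\<lambda>y. 0)" unfolding e_def by simp
  have fx0: "f x0 = 0"
  proof -
    have "t * f x0 \<le> 0" for t
      using le[OF dirI[OF zero Z(3), of t]] Wd_zero unfolding e0 by simp
    from this[of 1] this[of "-1"] show ?thesis by simp
  qed
  have lip: "f u - f v \<le> dM u v" if u: "u \<in> Z" and v: "v \<in> Z" for u v
  proof (cases "u = v")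
    case True then show ?thesis using dM_self by simp
  next
    case False
    have a: "((\<lambda>y. 0 + 1 * e u y), 0 + 1 * f u) \<in> G'" by (rule dirI[OF zero u])
    have "((\<lambda>y. (0 + 1 * e u y) + (-1) * e v y), (0 + 1 * f u) + (-1) * f v) \<in> G'"
      using dirI[OF a v, of "-1"] by simp
    moreover have "(\<lambda>y. (0 + 1 * e u y) + (-1) * e v y) = (\<lambda>y. ind u y - ind v y)"
      unfolding e_def by auto
    ultimately have "((\<lambda>y. ind u y - ind v y), f u - f v) \<in> G'" by simp
    then have "f u - f v \<le> Wd Z (\<lambda>y. ind u y - ind v y)" by (rule le)
    also have "\<dots> \<le> dM u v" by (rule Wd_mol[OF Z(2) u v False])
    finally show ?thesis .
  qed
  have r1: "(\<rho>, Wd Z \<rho>) \<in> G'"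
  proof -
    have "((\<lambda>z. 1 * \<rho> z), 1 * Wd Z \<rho>) \<in> G0" unfolding G0_def by blast
    then show ?thesis using G'(2) by auto
  qed
  have step: "((\<lambda>z. \<rho> z + (\<Sum>i<m. (- c i) * e (q i) z)), Wd Z \<rho> + (\<Sum>i<m. (- c i) * f (q i))) \<in> G'"
    if "m \<le> n" for m
    using that
  proof (induction m)
    case 0 then show ?case using r1 by simp
  next
    case (Suc m)
    have qm: "q m \<in> Z" using q Suc.prems by simp
    have "((\<lambda>y. (\<rho> y + (\<Sum>i<m. (- c i) * e (q i) y)) + (- c m) * e (q m) y),
           (Wd Z \<rho> + (\<Sum>i<m. (- c i) * f (q i))) + (- c m) * f (q m)) \<in> G'"
      using dirI[OF Suc.IH qm, of "- c m"] Suc.prems by simp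
    then show ?case by (simp add: algebra_simps)
  qed
  have "(\<lambda>z. \<rho> z + (\<Sum>i<n. (- c i) * e (q i) z)) = (\<lambda>z. 0)"
    unfolding \<rho>_def by (simp add: sum_negf)
  then have "Wd Z \<rho> + (\<Sum>i<n. (- c i) * f (q i)) \<le> 0" using le[OF step[of n]] Wd_zero by simp
  then have "Wd Z \<rho> \<le> (\<Sum>i<n. c i * (f (q i) - f x0))" using fx0 by (simp add: sum_negf)
  moreover have "\<rho> = (\<lambda>z. \<Sum>i<n. c i * (ind (q i) z - ind x0 z))" unfolding \<rho>_def e_def ..
  ultimately show ?thesis using lip by blast
qed



lemma mcshane:
  assumes Z: "finite Z" "Z \<noteq> {}" "Z \<subseteq> Mset" and lip: "\<forall>u\<in>Z. \<forall>v\<in>Z. f u - f v \<le> dM u v"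
  shows "\<exists>F\<in>Lip0_ball. \<exists>\<kappa>. \<forall>u\<in>Z. F u = f u + \<kappa>"
proof -
  define F0 where "F0 p = Min ((\<lambda>z. f z + dM p z) ` Z)" for p
  have fin: "finite ((\<lambda>z. f z + dM p z) ` Z)" for p using Z(1) by simp
  have ne: "(\<lambda>z. f z + dM p z) ` Z \<noteq> {}" for p using Z(2) by simp
  have F0le: "F0 p \<le> f z + dM p z" if "z \<in> Z" for p z
    unfolding F0_def using that fin by (intro Min_le) auto
  have F0ex: "\<exists>z\<in>Z. F0 p = f z + dM p z" for p
  proof -
    have "F0 p \<in> (\<lambda>z. f z + dM p z) ` Z" unfolding F0_def by (rule Min_in[OF fin ne])
    then show ?thesis by auto
  qed
  have F0Z: "F0 u = f u" if u: "u \<in> Z" for u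
  proof -
    have "F0 u \<le> f u" using F0le[OF u, of u] dM_self by simp
    moreover obtain z where z: "z \<in> Z" "F0 u = f z + dM u z" using F0ex by blast
    moreover have "f u - f z \<le> dM u z" using lip u z(1) by blast
    ultimately show ?thesis by linarith
  qed
  have F0lip: "F0 p \<le> F0 q + dM p q" if p: "p \<in> Mset" and q: "q \<in> Mset" for p q
  proof -
    obtain z where z: "z \<in> Z" "F0 q = f z + dM q z" using F0ex by blast
    have zM: "z \<in> Mset" using z(1) Z(3) by blast
    have "F0 p \<le> f z + dM p z" by (rule F0le[OF z(1)])
    also have "\<dots> \<le> f z + (dM p q + dM q z)" using dM_tri[OF p q zM] by simp
    finally show ?thesis using z(2) by simp
  qed
  define F where "F p = (if p \<in> Mset then F0 p - F0 (0,0) else 0)" for p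
  have "F \<in> Lip0_ball"
  proof (rule ballI)
    show "F (0,0) = 0" unfolding F_def using base_in by simp
    show "\<And>p. p \<notin> Mset \<Longrightarrow> F p = 0" unfolding F_def by simp
    fix u v assume u: "u \<in> Mset" and v: "v \<in> Mset"
    have "F0 u \<le> F0 v + dM u v" "F0 v \<le> F0 u + dM v u" using F0lip[OF u v] F0lip[OF v u] by auto
    then show "\<bar>F u - F v\<bar> \<le> dM u v" unfolding F_def using u v dM_sym[of v u] by (simp add: abs_le_iff)
  qed
  moreover have "\<forall>u\<in>Z. F u = f u + (- F0 (0,0))" unfolding F_def using F0Z Z(3) by auto
  ultimately show ?thesis by blast
qed

lemma sum_ind: "finite Z \<Longrightarrow> u \<in> Z \<Longrightarrow> (\<Sum>z\<in>Z. ind u z * g z) = g u"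
proof -
  assume "finite Z" "u \<in> Z"
  have "(\<Sum>z\<in>Z. ind u z * g z) = (\<Sum>z\<in>Z. if z = u then g z else 0)"
    by (rule sum.cong) (auto simp: ind_def)
  also have "\<dots> = g u" using \<open>finite Z\<close> \<open>u \<in> Z\<close> by (simp add: sum.delta)
  finally show ?thesis .
qed

definition cont :: "real \<times> pt \<times> pt \<Rightarrow> (pt \<Rightarrow> real) \<Rightarrow> real" where
  "cont x g = fst x * (g (fst (snd x)) - g (snd (snd x))) / dM (fst (snd x)) (snd (snd x))"

lemma pair_mv:
  assumes "finite Z" "fst (snd x) \<in> Z" "snd (snd x) \<in> Z"
  shows "(\<Sum>z\<in>Z. mv x z * g z) = cont x g"
proof -
  have "(\<Sum>z\<in>Z. mv x z * g z) = (\<Sum>z\<in>Z. (fst x / dM (fst (snd x)) (snd (snd x))) *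
          (ind (fst (snd x)) z * g z - ind (snd (snd x)) z * g z))"
    unfolding mv_def by (rule sum.cong) (auto simp: divide_inverse algebra_simps)
  also have "\<dots> = (fst x / dM (fst (snd x)) (snd (snd x))) *
          ((\<Sum>z\<in>Z. ind (fst (snd x)) z * g z) - (\<Sum>z\<in>Z. ind (snd (snd x)) z * g z))"
    by (simp only: sum_distrib_left[symmetric] sum_subtractf)
  also have "\<dots> = cont x g" unfolding cont_def sum_ind[OF assms(1,2)] sum_ind[OF assms(1,3)] by simp
  finally show ?thesis .
qed

lemma pair_Dm:
  assumes "finite Z" "valid Z xs"
  shows "(\<Sum>z\<in>Z. Dm xs z * g z) = sum_list (map (\<lambda>x. cont x g) xs)"
  using assms(2)
proof (induction xs)
  case Nil then show ?case by (simp add: Dm_def)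
next
  case (Cons x xs)
  have v: "valid Z xs" "fst (snd x) \<in> Z" "snd (snd x) \<in> Z" using Cons.prems unfolding valid_def by auto
  have "(\<Sum>z\<in>Z. Dm (x # xs) z * g z) = (\<Sum>z\<in>Z. mv x z * g z) + (\<Sum>z\<in>Z. Dm xs z * g z)"
    unfolding Dm_def by (simp add: distrib_right sum.distrib)
  then show ?case using pair_mv[OF assms(1) v(2,3)] Cons.IH[OF v(1)] by simp
qed

lemma pair_rho:
  fixes n :: nat
  assumes "finite Z" "x0 \<in> Z" "\<forall>i<n. q i \<in> Z"
  shows "(\<Sum>z\<in>Z. (\<Sum>i<n. c i * (ind (q i) z - ind x0 z)) * g z) = (\<Sum>i<n. c i * (g (q i) - g x0))"
proof -
  have "(\<Sum>z\<in>Z. (\<Sum>i<n. c i * (ind (q i) z - ind x0 z)) * g z)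
      = (\<Sum>z\<in>Z. \<Sum>i<n. c i * (ind (q i) z * g z - ind x0 z * g z))"
    unfolding sum_distrib_right by (rule sum.cong[OF refl], rule sum.cong[OF refl]) (simp add: algebra_simps)
  also have "\<dots> = (\<Sum>i<n. \<Sum>z\<in>Z. c i * (ind (q i) z * g z - ind x0 z * g z))" by (rule sum.swap)
  also have "\<dots> = (\<Sum>i<n. c i * ((\<Sum>z\<in>Z. ind (q i) z * g z) - (\<Sum>z\<in>Z. ind x0 z * g z)))"
    by (simp add: sum_distrib_left[symmetric] sum_subtractf)
  also have "\<dots> = (\<Sum>i<n. c i * (g (q i) - g x0))"
    by (rule sum.cong) (use assms sum_ind in auto)
  finally show ?thesis .
qed

lemma cont_bound:
  assumes g: "g \<in> Lip0_ball" and v: "valid Z xs" and Z: "Z \<subseteq> Mset"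
  shows "\<bar>sum_list (map (\<lambda>x. cont x g) xs)\<bar> \<le> wt xs"
  using v
proof (induction xs)
  case Nil then show ?case by (simp add: wt_def)
next
  case (Cons x xs)
  have v: "valid Z xs" "0 \<le> fst x" "fst (snd x) \<in> Z" "snd (snd x) \<in> Z" "fst (snd x) \<noteq> snd (snd x)"
    using Cons.prems unfolding valid_def by auto
  have uM: "fst (snd x) \<in> Mset" "snd (snd x) \<in> Mset" using v Z by auto
  have d: "dM (fst (snd x)) (snd (snd x)) > 0" using dM_pos[OF uM v(5)] .
  have l: "\<bar>g (fst (snd x)) - g (snd (snd x))\<bar> \<le> dM (fst (snd x)) (snd (snd x))" using ball_lip[OF g uM] .
  have "\<bar>cont x g\<bar> = fst x * (\<bar>g (fst (snd x)) - g (snd (snd x))\<bar> / dM (fst (snd x)) (snd (snd x)))"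
    unfolding cont_def using v(2) d by (simp add: abs_mult abs_divide)
  also have "\<dots> \<le> fst x * 1"
    using l d v(2) by (intro mult_left_mono) (simp_all add: divide_le_eq_1)
  finally have c: "\<bar>cont x g\<bar> \<le> fst x" by simp
  have "\<bar>sum_list (map (\<lambda>x. cont x g) (x # xs))\<bar> \<le> \<bar>cont x g\<bar> + \<bar>sum_list (map (\<lambda>x. cont x g) xs)\<bar>"
    by (simp add: abs_triangle_ineq)
  also have "\<dots> \<le> fst x + wt xs" using c Cons.IH[OF v(1)] by simp
  finally show ?case by (simp add: wt_def)
qed



lemma choose_N:
  assumes e0: "0 < (\<epsilon>::real)" and e1: "\<epsilon> < 1"
  shows "\<exists>N::nat. N \<ge> 1 \<and> 1/2^N < \<epsilon> \<and> \<epsilon>/2 \<le> 1/2^N"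
proof -
  have ex: "\<exists>n. (1/2::real)^n < \<epsilon>" by (rule real_arch_pow_inv) (use e0 in auto)
  define N where "N = (LEAST n. (1/2::real)^n < \<epsilon>)"
  have a: "(1/2::real)^N < \<epsilon>" unfolding N_def by (rule LeastI_ex[OF ex])
  have N0: "N \<noteq> 0" using a e1 by (cases "N = 0") auto
  have b: "\<not> (1/2::real)^(N-1) < \<epsilon>" unfolding N_def by (rule not_less_Least) (use N0 N_def in auto)
  have c: "(1/2::real)^N = (1/2)^(N-1) / 2"
  proof -
    have "N = Suc (N-1)" using N0 by simp
    then have "(1/2::real)^N = (1/2)^(Suc (N-1))" by metis
    then show ?thesis by simp
  qed
  have "N \<ge> 1" using N0 by simp
  moreover have "1/2^N < \<epsilon>" using a by (simp add: power_one_over)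
  moreover have "\<epsilon>/2 \<le> 1/2^N" using b c by (simp add: power_one_over[symmetric])
  ultimately show ?thesis by blast
qed

lemma t_props: "N \<ge> 1 \<Longrightarrow> 0 < 1/(2::real)^N \<and> 1/(2::real)^N \<le> 1/2"
proof -
  assume "N \<ge> 1"
  then have "(2::real)^1 \<le> 2^N" by (intro power_increasing) auto
  then show ?thesis by (simp add: field_simps)
qed

lemma Rt_snd: "t > 0 \<Longrightarrow> snd (Rt t p) \<le> t" unfolding Rt_def by simp

lemma lift_in:
  assumes q: "q \<in> Mset" and s: "0 \<le> s" "s \<le> 1/2"
    and lev: "snd q > 0 \<Longrightarrow> s \<le> snd q"
  shows "(fst q, max (snd q) s) \<in> Mset"
proof (cases "snd q > 0")
  case True
  then have "(fst q, max (snd q) s) = q" using lev by (cases q) auto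
  then show ?thesis using q by simp
next
  case False
  then have "snd q = 0" using Mset_props[OF q] by simp
  then have "fst q = 0 \<or> fst q = 1" using Mset_props[OF q] by simp
  then show ?thesis unfolding Mset_def using s \<open>snd q = 0\<close> by auto
qed

lemma lift_dist:
  assumes q: "q \<in> Mset" and s: "0 \<le> s" "s \<le> 1/2"
    and lev: "snd q > 0 \<Longrightarrow> s \<le> snd q"
  shows "dM q (fst q, max (snd q) s) \<le> s"
proof (cases "snd q > 0")
  case True
  then have "(fst q, max (snd q) s) = q" using lev by (cases q) auto
  then show ?thesis using dM_self s by simp
next
  case False
  then have z: "snd q = 0" using Mset_props[OF q] by simp
  then have "fst q = 0 \<or> fst q = 1" using Mset_props[OF q] by simp
  then show ?thesis unfolding dM_def using z s by auto
qed



context S begin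

lemma main_result: "\<exists>\<delta>>0. \<exists>\<nu>\<in>convF (Mol \<delta> \<epsilon>). fnorm (\<lambda>f. \<mu> f - \<nu> f) < \<epsilon>"
proof -
  obtain N :: nat where N1: "N \<ge> 1" and tlt: "1/2^N < \<epsilon>" and tge: "\<epsilon>/2 \<le> 1/2^N"
    using choose_N[OF e0 e1] by blast
  define t :: real where "t = 1/2^N"
  have tpos: "0 < t" and thalf: "t \<le> 1/2" using t_props[OF N1] unfolding t_def by auto
  have tlt': "t < \<epsilon>" and tge': "\<epsilon>/2 \<le> t" using tlt tge unfolding t_def by auto
  define E1 where "E1 = 2 * (\<eta> * (1 + 2*t/5) / (2*t/5))"
  have E1b: "E1 \<le> 3 * \<epsilon> / 16"
  proof -
    have "E1 = 5 * \<eta> / t + 2 * \<eta>" unfolding E1_def using tpos by (simp add: field_simps)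
    also have "5 * \<eta> / t \<le> 5 * \<eta> / (\<epsilon>/2)"
      using tge' e0 eta_pos by (intro divide_left_mono) auto
    also have "5 * \<eta> / (\<epsilon>/2) = 10 * \<epsilon> / 64" using e0 by (simp add: power2_eq_square field_simps)
    also have "2 * \<eta> \<le> 2 * \<epsilon> / 64" using e0 e1 by (simp add: power2_eq_square field_simps)
    finally show ?thesis by simp
  qed
  have E1nn: "0 \<le> E1" unfolding E1_def using tpos eta_pos by simp
  define e where "e = \<epsilon> / 100"
  have epos: "0 < e" unfolding e_def using e0 by simp
  obtain n c p where pM: "\<forall>i<n. p i \<in> Mset" and ap: "\<forall>f\<in>Lip0_ball. \<bar>\<mu> f - finF n c p f\<bar> < e"
    using mu_approx[OF free mbnd epos] by blast
  define q where "q i = Rt t (p i)" for i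
  have qM: "q i \<in> Mset" if "i < n" for i unfolding q_def using Rt_in[OF _ N1 t_def] pM that by blast
  have qt: "snd (q i) \<le> t" for i unfolding q_def using Rt_snd[OF tpos] by blast
  have stepA: "\<bar>\<mu> f - (\<Sum>i<n. c i * f (q i))\<bar> \<le> E1 + e" if f: "f \<in> Lip0_ball" for f
  proof -
    have fr: "fR t f \<in> Lip0_ball" by (rule fR_ball[OF f N1 t_def])
    have a1: "\<bar>\<mu> f - \<mu> (fR t f)\<bar> \<le> E1" unfolding E1_def by (rule retract_est[OF f N1 t_def])
    have a2: "\<bar>\<mu> (fR t f) - finF n c p (fR t f)\<bar> < e" using ap fr by blast
    have a3: "finF n c p (fR t f) = (\<Sum>i<n. c i * f (q i))"
      unfolding finF_def fR_def q_def by (rule sum.cong) (use pM in auto)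
    show ?thesis using a1 a2 a3 by linarith
  qed
  define C where "C = (\<Sum>i<n. \<bar>c i\<bar>)"
  have Cnn: "0 \<le> C" unfolding C_def by (simp add: sum_nonneg)
  define Lev where "Lev = (\<lambda>i. snd (q i)) ` {i. i < n \<and> snd (q i) > 0}"
  define SS where "SS = insert t (insert (e / (2 * (C + 1))) Lev)"
  have SSfin: "finite SS" unfolding SS_def Lev_def by simp
  have SSpos: "\<forall>x\<in>SS. 0 < x" unfolding SS_def Lev_def using tpos epos Cnn by auto
  define s where "s = Min SS"
  have spos: "0 < s" unfolding s_def using SSfin SSpos SS_def by (subst Min_gr_iff) auto
  have st: "s \<le> t" unfolding s_def SS_def using SSfin SS_def by (intro Min_le) auto
  have se: "s \<le> e / (2 * (C + 1))" unfolding s_def SS_def using SSfin SS_def by (intro Min_le) auto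
  have slev: "s \<le> snd (q i)" if "i < n" "snd (q i) > 0" for i
    unfolding s_def using SSfin that unfolding SS_def Lev_def by (intro Min_le) auto
  have shalf: "s \<le> 1/2" using st thalf by simp
  define Lq where "Lq i = (fst (q i), max (snd (q i)) s)" for i
  define x' where "x' = ((0::real), s)"
  have LqM: "Lq i \<in> Mset" if "i < n" for i
    unfolding Lq_def using lift_in[OF qM[OF that] _ shalf slev[OF that]] spos by simp
  have x'M: "x' \<in> Mset" unfolding x'_def Mset_def using spos shalf by auto
  have Lqlev: "s \<le> snd (Lq i) \<and> snd (Lq i) \<le> t" for i unfolding Lq_def using qt st by auto
  have Lqd: "\<bar>f (q i) - f (Lq i)\<bar> \<le> s" if "i < n" "f \<in> Lip0_ball" for i f
  proof -
    have "\<bar>f (q i) - f (Lq i)\<bar> \<le> dM (q i) (Lq i)" using ball_lip[OF that(2) qM[OF that(1)] LqM[OF that(1)]] .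
    also have "\<dots> \<le> s" unfolding Lq_def using lift_dist[OF qM[OF that(1)] _ shalf slev[OF that(1)]] spos by simp
    finally show ?thesis .
  qed
  have x'd: "\<bar>f x'\<bar> \<le> s" if "f \<in> Lip0_ball" for f
    using ball_bound[OF that x'M] unfolding x'_def by simp
  define \<psi> where "\<psi> g = (\<Sum>i<n. c i * (g (Lq i) - g x'))" for g
  define E where "E = E1 + 2 * e"
  have stepB: "\<bar>\<mu> f - \<psi> f\<bar> \<le> E" if f: "f \<in> Lip0_ball" for f
  proof -
    have "\<bar>(\<Sum>i<n. c i * f (q i)) - \<psi> f\<bar> = \<bar>\<Sum>i<n. c i * (f (q i) - f (Lq i) + f x')\<bar>"
      unfolding \<psi>_def by (simp add: sum_subtractf[symmetric] algebra_simps)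
    also have "\<dots> \<le> (\<Sum>i<n. \<bar>c i * (f (q i) - f (Lq i) + f x')\<bar>)" by (rule sum_abs)
    also have "\<dots> \<le> (\<Sum>i<n. \<bar>c i\<bar> * (2 * s))"
    proof (rule sum_mono)
      fix i assume "i \<in> {..<n}"
      then have i: "i < n" by simp
      have "\<bar>f (q i) - f (Lq i) + f x'\<bar> \<le> 2 * s" using Lqd[OF i f] x'd[OF f] by linarith
      then show "\<bar>c i * (f (q i) - f (Lq i) + f x')\<bar> \<le> \<bar>c i\<bar> * (2 * s)"
        unfolding abs_mult by (intro mult_left_mono) auto
    qed
    also have "\<dots> = 2 * s * C" unfolding C_def by (simp add: sum_distrib_left sum_distrib_right mult.commute)
    also have "\<dots> \<le> 2 * (e / (2 * (C + 1))) * C" using se Cnn by (intro mult_right_mono) auto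
    also have "\<dots> \<le> e"
    proof -
      have "2 * (e / (2 * (C + 1))) * C = e * (C / (C + 1))" using Cnn by (simp add: field_simps)
      also have "\<dots> \<le> e * 1" using Cnn epos by (intro mult_left_mono) auto
      finally show ?thesis by simp
    qed
    finally have "\<bar>(\<Sum>i<n. c i * f (q i)) - \<psi> f\<bar> \<le> e" .
    then show ?thesis using stepA[OF f] unfolding E_def by linarith
  qed
  define Z where "Z = insert x' (Lq ` {..<n})"
  have Zfin: "finite Z" unfolding Z_def by simp
  have ZM: "Z \<subseteq> Mset" unfolding Z_def using x'M LqM by auto
  have x'Z: "x' \<in> Z" unfolding Z_def by simp
  have LqZ: "\<forall>i<n. Lq i \<in> Z" unfolding Z_def by simp
  have Zne: "Z \<noteq> {}" using x'Z by blast
  have Zlev: "s \<le> snd z \<and> snd z \<le> t" if "z \<in> Z" for z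
    using that Lqlev st unfolding Z_def x'_def by auto
  define \<rho> where "\<rho> = (\<lambda>z. \<Sum>i<n. c i * (ind (Lq i) z - ind x' z))"
  obtain f0 where f0lip: "\<forall>u\<in>Z. \<forall>v\<in>Z. f0 u - f0 v \<le> dM u v"
    and f0W: "Wd Z \<rho> \<le> (\<Sum>i<n. c i * (f0 (Lq i) - f0 x'))"
    using duality[OF Zfin ZM x'Z LqZ, of c] unfolding \<rho>_def by blast
  obtain F \<kappa> where F: "F \<in> Lip0_ball" "\<forall>u\<in>Z. F u = f0 u + \<kappa>"
    using mcshane[OF Zfin Zne ZM f0lip] by blast
  have "\<psi> F = (\<Sum>i<n. c i * (f0 (Lq i) - f0 x'))"
    unfolding \<psi>_def by (rule sum.cong) (use F(2) LqZ x'Z in auto)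
  then have W1: "Wd Z \<rho> \<le> \<psi> F" using f0W by simp
  have "\<psi> F \<le> \<mu> F + E" using stepB[OF F(1)] by linarith
  also have "\<mu> F \<le> fnorm \<mu>" using fnorm_ge[OF mbnd F(1)] by linarith
  finally have Wb: "Wd Z \<rho> \<le> 1 + E" using W1 n1 by linarith
  have rep: "Rep Z \<rho>" unfolding \<rho>_def
    by (rule Rep_sum) (use Rep_mol LqZ x'Z ZM in auto)
  have Sne: "{wt xs | xs. valid Z xs \<and> Dm xs = \<rho>} \<noteq> {}" using rep unfolding Rep_def by blast
  obtain xs where xs: "valid Z xs" "Dm xs = \<rho>" "wt xs < Wd Z \<rho> + e"
  proof -
    have "Inf {wt xs | xs. valid Z xs \<and> Dm xs = \<rho>} < Wd Z \<rho> + e" unfolding Wd_def using epos by simp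
    from cInf_lessD[OF Sne this] show ?thesis using that by blast
  qed
  define A where "A = wt xs"
  have Aub: "A \<le> 1 + E + e" unfolding A_def using xs(3) Wb by linarith
  have pair: "\<psi> g = sum_list (map (\<lambda>x. cont x g) xs)" for g
  proof -
    have "\<psi> g = (\<Sum>z\<in>Z. \<rho> z * g z)" unfolding \<psi>_def \<rho>_def using pair_rho[OF Zfin x'Z LqZ] by simp
    also have "\<dots> = (\<Sum>z\<in>Z. Dm xs z * g z)" using xs(2) by simp
    also have "\<dots> = sum_list (map (\<lambda>x. cont x g) xs)" by (rule pair_Dm[OF Zfin xs(1)])
    finally show ?thesis .
  qed
  have psib: "\<bar>\<psi> g\<bar> \<le> A" if "g \<in> Lip0_ball" for g
    unfolding pair A_def by (rule cont_bound[OF that xs(1) ZM])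
  obtain f1 where f1: "f1 \<in> Lip0_ball" "\<bar>\<mu> f1\<bar> > 1 - \<eta>" using fnorm_witness[OF hn] by blast
  have Alb: "A > 1 - \<eta> - E" using psib[OF f1(1)] stepB[OF f1(1)] f1(2) by linarith
  have Ebound: "E \<le> 3 * \<epsilon> / 16 + 2 * e" unfolding E_def using E1b by simp
  have Apos: "A > 0"
  proof -
    have "\<eta> < 1/64" by (rule eta_small)
    moreover have "e \<le> 1/100" unfolding e_def using e1 by simp
    moreover have "3 * \<epsilon> / 16 \<le> 3/16" using e1 by simp
    ultimately have "1 - \<eta> - E > 0" using Ebound by linarith
    then show ?thesis using Alb by linarith
  qed
  define m where "m = length xs"
  define w where "w j = fst (xs ! j) / A" for j
  define gg where "gg j = mol (fst (snd (xs ! j))) (snd (snd (xs ! j)))" for j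
  define \<nu> where "\<nu> = (\<lambda>f. \<Sum>j<m. w j * gg j f)"
  have xsj: "0 \<le> fst (xs ! j) \<and> fst (snd (xs ! j)) \<in> Z \<and> snd (snd (xs ! j)) \<in> Z \<and> fst (snd (xs ! j)) \<noteq> snd (snd (xs ! j))"
    if "j < m" for j
    using xs(1) that unfolding valid_def m_def by (meson nth_mem)
  have wsum: "(\<Sum>j<m. w j) = 1"
  proof -
    have "(\<Sum>j<m. w j) = (\<Sum>j<m. fst (xs ! j)) / A" unfolding w_def by (simp add: sum_divide_distrib)
    also have "(\<Sum>j<m. fst (xs ! j)) = A" unfolding A_def wt_def m_def
      by (simp add: sum_list_sum_nth atLeast0LessThan)
    finally show ?thesis using Apos by simp
  qed
  have memb: "\<nu> \<in> convF (Mol (s/2) \<epsilon>)"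
    unfolding convF_def
  proof (intro CollectI exI conjI allI impI)
    show "(\<Sum>j<m. w j) = 1" by (rule wsum)
    show "\<nu> = (\<lambda>f. \<Sum>j<m. w j * gg j f)" by (rule \<nu>_def)
  next
    fix j assume j: "j < m"
    show "0 \<le> w j" unfolding w_def using xsj[OF j] Apos by simp
    have u: "fst (snd (xs ! j)) \<in> Z" and v: "snd (snd (xs ! j)) \<in> Z" using xsj[OF j] by auto
    show "gg j \<in> Mol (s/2) \<epsilon>"
      unfolding gg_def Mol_def
      using xsj[OF j] ZM Zlev[OF u] Zlev[OF v] spos tlt' by fastforce
  qed
  have nueq: "\<nu> g = \<psi> g / A" for g
  proof -
    have "\<nu> g = (\<Sum>j<m. cont (xs ! j) g / A)"
      unfolding \<nu>_def w_def gg_def mol_def cont_def by (rule sum.cong) auto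
    also have "\<dots> = (\<Sum>j<m. cont (xs ! j) g) / A" by (simp add: sum_divide_distrib)
    also have "(\<Sum>j<m. cont (xs ! j) g) = sum_list (map (\<lambda>x. cont x g) xs)"
      unfolding m_def by (simp add: sum_list_sum_nth atLeast0LessThan)
    finally show ?thesis unfolding pair by simp
  qed
  have fin: "\<bar>\<mu> g - \<nu> g\<bar> \<le> 2 * E + \<eta> + e" if g: "g \<in> Lip0_ball" for g
  proof -
    have "\<bar>\<psi> g - \<nu> g\<bar> = \<bar>\<psi> g\<bar> * \<bar>1 - 1/A\<bar>" unfolding nueq
      by (simp add: abs_mult[symmetric] algebra_simps)
    also have "\<dots> \<le> A * \<bar>1 - 1/A\<bar>" using psib[OF g] by (intro mult_right_mono) auto
    also have "\<dots> = \<bar>A * (1 - 1/A)\<bar>" using Apos by (simp add: abs_mult)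
    also have "A * (1 - 1/A) = A - 1" using Apos by (simp add: right_diff_distrib)
    also have "\<bar>A - 1\<bar> \<le> E + \<eta> + e" unfolding abs_le_iff using Aub Alb epos eta_pos by linarith
    finally have "\<bar>\<psi> g - \<nu> g\<bar> \<le> E + \<eta> + e" .
    then show ?thesis using stepB[OF g] by linarith
  qed
  have "2 * E + \<eta> + e < \<epsilon>"
  proof -
    have "\<eta> < \<epsilon> / 64" using e0 e1 by (simp add: power2_eq_square)
    then show ?thesis using Ebound e0 unfolding e_def by linarith
  qed
  then have "fnorm (\<lambda>f. \<mu> f - \<nu> f) < \<epsilon>" using fnorm_le[of "\<lambda>f. \<mu> f - \<nu> f" "2 * E + \<eta> + e"] fin by fastforce
  moreover have "s/2 > 0" using spos by simp
  ultimately show ?thesis using memb by blast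
qed

end


theorem mainTheorem3:
  fixes \<epsilon> :: real and \<mu> :: "(real \<times> real \<Rightarrow> real) \<Rightarrow> real"
  assumes "0 < \<epsilon>" and "\<epsilon> < 1"
    and "\<mu> \<in> FreeSp" and "fnorm \<mu> \<le> 1"
    and "fnorm (\<lambda>f. mol (0, 0) (1, 0) f + \<mu> f) < 1 + \<epsilon>^2 / 64"
    and "fnorm (\<lambda>f. mol (0, 0) (1, 0) f - \<mu> f) < 1 + \<epsilon>^2 / 64"
    and "fnorm \<mu> > 1 - \<epsilon>^2 / 64"
  shows "\<exists>\<delta>>0. \<exists>\<nu>\<in>convF (Mol \<delta> \<epsilon>). fnorm (\<lambda>f. \<mu> f - \<nu> f) < \<epsilon>"
proof -
  interpret S \<epsilon> \<mu> using assms unfolding S_def by blast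
  show ?thesis by (rule main_result)
qed

end
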